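(* Let $a_{4,0},a_{2,2},a_{0,4}\geqslant0$ with $a_{4,0}+a_{2,2}>0$, $a_{2,2}+a_{0,4}>0$, let $t\in\mathbb{R}$ and $W_t(x,y)=e^{-(a_{4,0}x^4+a_{2,2}x^2y^2+a_{0,4}y^4)+t(x^2+y^2)}$. Let $\{\mathbb{Q}_n(t)\}_{n\geqslant0}$ be the monic orthogonal polynomial system for $W_t$ with three term relation matrices $E_{n,1}(t),E_{n,2}(t)$ (see context), and set $\mathbf{E}_n(t)=E_{n,1}(t)+E_{n,2}(t)$ for $n\geqslant1$ and $$V_{n+1}(t)=L_{n,1}E_{n+1,1}(t)+L_{n,2}E_{n+1,2}(t)+E_{n,1}(t)L_{n-1,1}+E_{n,2}(t)L_{n-1,2}.$$ Then for all $n\geqslant1$, $$\dot{\mathbf{E}}_n(t)=V_{n+1}(t)\mathbf{E}_n(t)-\mathbf{E}_n(t)V_n(t),$$ where the dot denotes derivative with respect to $t$.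
   Context: $\mathbb{X}_n=(x^n,x^{n-1}y,\dots,y^n)^T$. $L_{n,1}=(I_{n+1}\,|\,0)$ and $L_{n,2}=(0\,|\,I_{n+1})$ are $(n+1)\times(n+2)$ matrices (so $x\mathbb{X}_n=L_{n,1}\mathbb{X}_{n+1}$, $y\mathbb{X}_n=L_{n,2}\mathbb{X}_{n+1}$). Inner product $(f,g)_t=\iint_{\mathbb{R}^2}fgW_t\,dx\,dy$, applied entrywise to vectors. The monic orthogonal polynomial system is the sequence of column vectors $\mathbb{Q}_n(t)=\mathbb{X}_n+(\text{vector of polynomials of total degree}<n)$, with coefficients depending on $t$, such that $(\mathbb{Q}_n(t),\mathbb{Q}_m(t)^T)_t=0$ for $m\neq n$ and $H_n(t):=(\mathbb{Q}_n(t),\mathbb{Q}_n(t)^T)_t$ is symmetric positive definite. It satisfies, for $n\geqslant0$, $x\mathbb{Q}_n(t)=L_{n,1}\mathbb{Q}_{n+1}(t)+E_{n,1}(t)\mathbb{Q}_{n-1}(t)$ and $y\mathbb{Q}_n(t)=L_{n,2}\mathbb{Q}_{n+1}(t)+E_{n,2}(t)\mathbb{Q}_{n-1}(t)$, with $\mathbb{Q}_{-1}=0$, $\mathbb{Q}_0=1$, and $E_{n,i}(t)$ of size $(n+1)\times n$ (with $E_{0,i}$ taken as zero). *)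

theory Defs
  imports "HOL-Analysis.Analysis" "Jordan_Normal_Form.Matrix"
begin

definition W :: "real \<Rightarrow> real \<Rightarrow> real \<Rightarrow> real \<Rightarrow> real \<Rightarrow> real \<Rightarrow> real" where
  "W a40 a22 a04 t x y =
     exp (- (a40 * x ^ 4 + a22 * x\<^sup>2 * y\<^sup>2 + a04 * y ^ 4) + t * (x\<^sup>2 + y\<^sup>2))"

definition ip :: "real \<Rightarrow> real \<Rightarrow> real \<Rightarrow> real \<Rightarrow>
    (real \<Rightarrow> real \<Rightarrow> real) \<Rightarrow> (real \<Rightarrow> real \<Rightarrow> real) \<Rightarrow> real" where
  "ip a40 a22 a04 t f g =
     integral\<^sup>L (lborel :: (real \<times> real) measure)
       (\<lambda>p. f (fst p) (snd p) * g (fst p) (snd p) * W a40 a22 a04 t (fst p) (snd p))"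

definition poly_deg_lt :: "nat \<Rightarrow> (real \<Rightarrow> real \<Rightarrow> real) \<Rightarrow> bool" where
  "poly_deg_lt n p \<longleftrightarrow> (\<exists>c :: nat \<Rightarrow> nat \<Rightarrow> real.
     \<forall>x y. p x y = (\<Sum>(j, k) \<in> {(j, k). j + k < n}. c j k * x ^ j * y ^ k))"

text \<open>Q n i (for i \<le> n) is the i-th entry of the column vector Q_n, i.e.
  Q n i = x^(n-i) y^i + (lower degree terms).  Monic orthogonal polynomial system
  with respect to the weight W_t.\<close>
definition monic_OPS :: "real \<Rightarrow> real \<Rightarrow> real \<Rightarrow> real \<Rightarrow>
    (nat \<Rightarrow> nat \<Rightarrow> real \<Rightarrow> real \<Rightarrow> real) \<Rightarrow> bool" where
  "monic_OPS a40 a22 a04 t Q \<longleftrightarrow>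
     (\<forall>n i. i \<le> n \<longrightarrow>
        poly_deg_lt n (\<lambda>x y. Q n i x y - x ^ (n - i) * y ^ i)) \<and>
     (\<forall>n m i j. n \<noteq> m \<longrightarrow> i \<le> n \<longrightarrow> j \<le> m \<longrightarrow>
        ip a40 a22 a04 t (Q n i) (Q m j) = 0) \<and>
     (\<forall>n (v :: nat \<Rightarrow> real). (\<exists>i\<le>n. v i \<noteq> 0) \<longrightarrow>
        (\<Sum>i\<le>n. \<Sum>j\<le>n. v i * v j * ip a40 a22 a04 t (Q n i) (Q n j)) > 0)"

definition L1 :: "nat \<Rightarrow> real mat" where
  "L1 n = mat (n + 1) (n + 2) (\<lambda>(i, j). if j = i then 1 else 0)"

definition L2 :: "nat \<Rightarrow> real mat" where
  "L2 n = mat (n + 1) (n + 2) (\<lambda>(i, j). if j = i + 1 then 1 else 0)"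

text \<open>Three term relations x Q_n = L_{n,1} Q_{n+1} + E_{n,1} Q_{n-1},
  y Q_n = L_{n,2} Q_{n+1} + E_{n,2} Q_{n-1} (componentwise, Q_{-1} = 0),
  with E_{n,i} of size (n+1) x n and E_{0,i} = 0.\<close>
definition three_term :: "(nat \<Rightarrow> nat \<Rightarrow> real \<Rightarrow> real \<Rightarrow> real) \<Rightarrow>
    (nat \<Rightarrow> real mat) \<Rightarrow> (nat \<Rightarrow> real mat) \<Rightarrow> bool" where
  "three_term Q E1 E2 \<longleftrightarrow>
     (\<forall>n. E1 n \<in> carrier_mat (n + 1) n \<and> E2 n \<in> carrier_mat (n + 1) n) \<and>
     E1 0 = 0\<^sub>m 1 0 \<and> E2 0 = 0\<^sub>m 1 0 \<and>
     (\<forall>n i x y. i \<le> n \<longrightarrow>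
        x * Q n i x y = Q (n + 1) i x y + (\<Sum>j<n. E1 n $$ (i, j) * Q (n - 1) j x y)) \<and>
     (\<forall>n i x y. i \<le> n \<longrightarrow>
        y * Q n i x y = Q (n + 1) (i + 1) x y + (\<Sum>j<n. E2 n $$ (i, j) * Q (n - 1) j x y))"

text \<open>V_{n+1} = L_{n,1}E_{n+1,1} + L_{n,2}E_{n+1,2} + E_{n,1}L_{n-1,1} + E_{n,2}L_{n-1,2},
  for n \<ge> 0; for n = 0 the last two terms are E_{0,i} L_{-1,i} = 0 (a 1 x 1 zero
  matrix since E_{0,i} has n = 0 columns).  Vmat E1 E2 (n+1) = V_{n+1}.\<close>
definition Vmat :: "(nat \<Rightarrow> real mat) \<Rightarrow> (nat \<Rightarrow> real mat) \<Rightarrow> nat \<Rightarrow> real mat" where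
  "Vmat E1 E2 m = (let n = m - 1 in
     L1 n * E1 (n + 1) + L2 n * E2 (n + 1) +
     (if n = 0 then 0\<^sub>m 1 1 else E1 n * L1 (n - 1) + E2 n * L2 (n - 1)))"

end

theory Submission imports Defs "Jordan_Normal_Form.Determinant" begin

lemma right_inverse_exists:
  fixes H :: "nat \<Rightarrow> nat \<Rightarrow> real"
  assumes pd: "\<And>v. (\<exists>i<n. v i \<noteq> 0) \<Longrightarrow> (\<Sum>i<n. \<Sum>j<n. v i * v j * H i j) > 0"
  shows "\<exists>B. \<forall>a<n. \<forall>b<n. (\<Sum>l<n. H a l * B l b) = (if a = b then 1 else 0)"
proof -
  define A where "A = mat n n (\<lambda>(i,j). H i j)"
  have A: "A \<in> carrier_mat n n" unfolding A_def by simp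
  have "det A \<noteq> 0"
  proof
    assume "det A = 0"
    then obtain v where v: "v \<in> carrier_vec n" "v \<noteq> 0\<^sub>v n" "A *\<^sub>v v = 0\<^sub>v n"
      using det_0_iff_vec_prod_zero[OF A] by auto
    have "\<exists>i<n. v $ i \<noteq> 0" using v(1,2) by (metis eq_vecI carrier_vecD index_zero_vec(1,2))
    hence pos: "(\<Sum>i<n. \<Sum>j<n. v $ i * v $ j * H i j) > 0" using pd[of "\<lambda>i. v $ i"] by simp
    have "\<And>i. i < n \<Longrightarrow> (\<Sum>j<n. H i j * v $ j) = 0"
    proof -
      fix i assume i: "i < n"
      have "(A *\<^sub>v v) $ i = 0" using v(3) i by simp
      thus "(\<Sum>j<n. H i j * v $ j) = 0" using i v(1) A
        by (simp add: A_def scalar_prod_def lessThan_atLeast0)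
    qed
    hence "(\<Sum>i<n. \<Sum>j<n. v $ i * v $ j * H i j) = (\<Sum>i<n. v $ i * 0)"
    proof (intro sum.cong refl)
      fix i assume "i \<in> {..<n}"
      have "(\<Sum>j<n. v $ i * v $ j * H i j) = v $ i * (\<Sum>j<n. H i j * v $ j)"
        by (simp add: sum_distrib_left mult_ac)
      thus "(\<Sum>j<n. v $ i * v $ j * H i j) = v $ i * 0" using \<open>i \<in> {..<n}\<close> \<open>\<And>i. i < n \<Longrightarrow> (\<Sum>j<n. H i j * v $ j) = 0\<close> by simp
    qed
    thus False using pos by simp
  qed
  then have "A \<in> Units (ring_mat TYPE(real) n ())" by (rule det_non_zero_imp_unit[OF A])
  then obtain B where B: "B \<in> carrier_mat n n" "A * B = 1\<^sub>m n"
    by (auto simp: Units_def ring_mat_def)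
  show ?thesis
  proof (intro exI allI impI)
    fix a b assume ab: "a < n" "b < n"
    have "(A * B) $$ (a,b) = (if a = b then 1 else 0)" using B ab by simp
    thus "(\<Sum>l<n. H a l * (\<lambda>l b. B $$ (l,b)) l b) = (if a = b then 1 else 0)"
      using ab B by (simp add: A_def scalar_prod_def lessThan_atLeast0)
  qed
qed

lemma exp_minus_one_bound: fixes z :: real shows "\<bar>exp z - 1\<bar> \<le> \<bar>z\<bar> * exp \<bar>z\<bar>"
proof (cases "z \<ge> 0")
  case True
  have "1 - z \<le> exp (-z)" using exp_ge_add_one_self[of "-z"] by simp
  hence "(1 - z) * exp z \<le> exp (-z) * exp z" by (simp add: mult_right_mono)
  hence "exp z - z * exp z \<le> 1" by (simp add: exp_minus_inverse algebra_simps)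
  moreover have "exp z \<ge> 1" using True by simp
  ultimately show ?thesis using True by simp
next
  case False
  have "1 + z \<le> exp z" by simp
  moreover have "exp z \<le> 1" using False by simp
  moreover have "exp \<bar>z\<bar> \<ge> 1" by simp
  ultimately show ?thesis using False
    by (smt (verit) mult_le_cancel_left1)
qed

lemma exp_taylor2_bound: fixes z :: real shows "\<bar>exp z - 1 - z\<bar> \<le> z\<^sup>2 * exp \<bar>z\<bar>"
proof (cases "z \<ge> 0")
  case True
  have "1 - z \<le> exp (-z)" using exp_ge_add_one_self[of "-z"] by simp
  hence "(1 - z) * exp z \<le> exp (-z) * exp z" by (simp add: mult_right_mono)
  hence a: "exp z - 1 \<le> z * exp z" by (simp add: exp_minus_inverse algebra_simps)
  have "exp z - 1 - z \<le> z * exp z - z" using a by linarith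
  hence "exp z - 1 - z \<le> z * (exp z - 1)" by (simp add: algebra_simps)
  also have "\<dots> \<le> z * (z * exp z)" using a True by (simp add: mult_left_mono)
  finally have "exp z - 1 - z \<le> z\<^sup>2 * exp z" by (simp add: power2_eq_square)
  moreover have "0 \<le> exp z - 1 - z" using exp_ge_add_one_self[of z] by linarith
  ultimately show ?thesis using True by simp
next
  case False
  define w where "w = - z"
  have w: "w > 0" using False w_def by simp
  have "1 + w \<le> exp w" by simp
  hence "exp (-w) * (1 + w) \<le> exp (-w) * exp w" by (simp add: mult_left_mono)
  hence e1: "exp (-w) * (1 + w) \<le> 1" by (simp add: exp_add[symmetric])
  have "exp (-w) \<le> 1 - w + w\<^sup>2"
  proof -
    have "(1 - w + w\<^sup>2) * (1 + w) = 1 + w^3" by (simp add: algebra_simps power2_eq_square power3_eq_cube)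
    hence "exp (-w) * (1 + w) \<le> (1 - w + w\<^sup>2) * (1 + w)" using e1 w by (simp add: order_trans[OF e1])
    thus ?thesis using w by (simp add: mult_le_cancel_right)
  qed
  hence "exp z - 1 - z \<le> z\<^sup>2" using w_def by simp
  moreover have "0 \<le> exp z - 1 - z" using exp_ge_add_one_self[of z] by linarith
  moreover have "z\<^sup>2 \<le> z\<^sup>2 * exp \<bar>z\<bar>" using mult_left_mono[of 1 "exp \<bar>z\<bar>" "z\<^sup>2"] by simp
  ultimately show ?thesis by simp
qed

lemma deriv_from_bound:
  fixes \<phi> :: "real \<Rightarrow> real"
  assumes b: "\<And>s. \<bar>s - t\<bar> \<le> 1 \<Longrightarrow> \<bar>\<phi> s - \<phi> t - (s - t) * L\<bar> \<le> C * (s - t)\<^sup>2"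
  shows "(\<phi> has_real_derivative L) (at t)"
  unfolding has_field_derivative_iff LIM_eq
proof (intro allI impI)
  fix r :: real assume r: "r > 0"
  define d where "d = min 1 (r / (\<bar>C\<bar> + 1))"
  have d: "d > 0" using r by (simp add: d_def)
  show "\<exists>d>0. \<forall>x. x \<noteq> t \<and> norm (x - t) < d \<longrightarrow> norm ((\<phi> x - \<phi> t) / (x - t) - L) < r"
  proof (intro exI[of _ d] conjI allI impI d)
    fix x assume x: "x \<noteq> t \<and> norm (x - t) < d"
    hence x1: "\<bar>x - t\<bar> \<le> 1" and x2: "\<bar>x - t\<bar> < r / (\<bar>C\<bar> + 1)" and x0: "\<bar>x - t\<bar> > 0"
      by (auto simp: d_def)
    have "(\<phi> x - \<phi> t) / (x - t) - L = (\<phi> x - \<phi> t - (x - t) * L) / (x - t)"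
      using x0 by (simp add: field_simps)
    hence "\<bar>(\<phi> x - \<phi> t) / (x - t) - L\<bar> = \<bar>\<phi> x - \<phi> t - (x - t) * L\<bar> / \<bar>x - t\<bar>"
      by (simp add: abs_divide)
    also have "\<dots> \<le> C * (x - t)\<^sup>2 / \<bar>x - t\<bar>"
      using b[OF x1] x0 by (simp add: divide_right_mono)
    also have "\<dots> = C * \<bar>x - t\<bar>"
    proof -
      have "(x - t)\<^sup>2 = \<bar>x - t\<bar> * \<bar>x - t\<bar>" by (simp add: power2_eq_square del: abs_mult_self_eq)
      thus ?thesis using x0 by (simp del: abs_mult_self_eq)
    qed
    also have "\<dots> \<le> \<bar>C\<bar> * \<bar>x - t\<bar>" by (simp add: mult_right_mono)
    also have "\<dots> < r"
    proof -
      have "\<bar>C\<bar> * \<bar>x - t\<bar> \<le> (\<bar>C\<bar> + 1) * \<bar>x - t\<bar>" by (simp add: mult_right_mono)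
      also have "\<dots> < (\<bar>C\<bar> + 1) * (r / (\<bar>C\<bar> + 1))" using x2 by (intro mult_strict_left_mono) auto
      also have "\<dots> = r" by simp
      finally show ?thesis .
    qed
    finally show "norm ((\<phi> x - \<phi> t) / (x - t) - L) < r" by simp
  qed
qed

definition gr :: "(real \<Rightarrow> real \<Rightarrow> real) \<Rightarrow> bool" where
  "gr f \<longleftrightarrow> (\<lambda>p. f (fst p) (snd p)) \<in> borel_measurable lborel \<and>
     (\<exists>C K. \<forall>x y. \<bar>f x y\<bar> \<le> C * exp (K * (x\<^sup>2 + y\<^sup>2)))"

lemma lborel_cont: "continuous_on UNIV f \<Longrightarrow> f \<in> borel_measurable (lborel :: (real \<times> real) measure)"
  using borel_measurable_continuous_onI measurable_cong_sets sets_lborel by metis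

lemma gr_const: "gr (\<lambda>x y. c)"
  unfolding gr_def
proof (intro conjI exI allI)
  show "(\<lambda>p. c) \<in> borel_measurable lborel" by simp
  fix x y :: real show "\<bar>c\<bar> \<le> \<bar>c\<bar> * exp (0 * (x\<^sup>2 + y\<^sup>2))" by simp
qed

lemma abs_le_1_sq: fixes x :: real shows "\<bar>x\<bar> \<le> 1 + x\<^sup>2"
proof (cases "\<bar>x\<bar> \<le> 1")
  case True thus ?thesis by (smt (verit) zero_le_power2)
next
  case False
  hence "\<bar>x\<bar> * 1 \<le> \<bar>x\<bar> * \<bar>x\<bar>" by (intro mult_left_mono) auto
  moreover have "x\<^sup>2 = \<bar>x\<bar> * \<bar>x\<bar>" by (simp add: power2_eq_square)
  ultimately show ?thesis by linarith
qed

lemma gr_x: "gr (\<lambda>x y. x)"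
  unfolding gr_def
proof (intro conjI exI allI)
  show "(\<lambda>p. fst p) \<in> borel_measurable lborel" by (simp add: borel_measurable_continuous_onI continuous_intros)
  fix x y :: real
  have "\<bar>x\<bar> \<le> 1 + x\<^sup>2" by (rule abs_le_1_sq)
  also have "\<dots> \<le> exp (x\<^sup>2)" by simp
  also have "\<dots> \<le> exp (x\<^sup>2 + y\<^sup>2)" by simp
  finally show "\<bar>x\<bar> \<le> 1 * exp (1 * (x\<^sup>2 + y\<^sup>2))" by simp
qed

lemma gr_y: "gr (\<lambda>x y. y)"
  unfolding gr_def
proof (intro conjI exI allI)
  show "(\<lambda>p. snd p) \<in> borel_measurable lborel" by (simp add: borel_measurable_continuous_onI continuous_intros)
  fix x y :: real
  have "\<bar>y\<bar> \<le> 1 + y\<^sup>2" by (rule abs_le_1_sq)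
  also have "\<dots> \<le> exp (y\<^sup>2)" by simp
  also have "\<dots> \<le> exp (x\<^sup>2 + y\<^sup>2)" by simp
  finally show "\<bar>y\<bar> \<le> 1 * exp (1 * (x\<^sup>2 + y\<^sup>2))" by simp
qed

lemma gr_add: assumes "gr f" "gr g" shows "gr (\<lambda>x y. f x y + g x y)"
proof -
  obtain C1 K1 C2 K2 where b1: "\<And>x y. \<bar>f x y\<bar> \<le> C1 * exp (K1 * (x\<^sup>2 + y\<^sup>2))"
    and b2: "\<And>x y. \<bar>g x y\<bar> \<le> C2 * exp (K2 * (x\<^sup>2 + y\<^sup>2))"
    using assms unfolding gr_def by blast
  have m: "(\<lambda>p. f (fst p) (snd p) + g (fst p) (snd p)) \<in> borel_measurable lborel"
    using assms unfolding gr_def by (intro borel_measurable_add) auto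
  have "\<bar>f x y + g x y\<bar> \<le> (\<bar>C1\<bar> + \<bar>C2\<bar>) * exp ((\<bar>K1\<bar> + \<bar>K2\<bar>) * (x\<^sup>2 + y\<^sup>2))" for x y
  proof -
    have r: "x\<^sup>2 + y\<^sup>2 \<ge> 0" by simp
    have "K1 * (x\<^sup>2 + y\<^sup>2) \<le> (\<bar>K1\<bar> + \<bar>K2\<bar>) * (x\<^sup>2 + y\<^sup>2)" using r
      by (intro mult_right_mono) auto
    hence e1: "exp (K1 * (x\<^sup>2 + y\<^sup>2)) \<le> exp ((\<bar>K1\<bar> + \<bar>K2\<bar>) * (x\<^sup>2 + y\<^sup>2))" by simp
    have "K2 * (x\<^sup>2 + y\<^sup>2) \<le> (\<bar>K1\<bar> + \<bar>K2\<bar>) * (x\<^sup>2 + y\<^sup>2)" using r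
      by (intro mult_right_mono) auto
    hence e2: "exp (K2 * (x\<^sup>2 + y\<^sup>2)) \<le> exp ((\<bar>K1\<bar> + \<bar>K2\<bar>) * (x\<^sup>2 + y\<^sup>2))" by simp
    have "C1 * exp (K1 * (x\<^sup>2 + y\<^sup>2)) \<le> \<bar>C1\<bar> * exp ((\<bar>K1\<bar> + \<bar>K2\<bar>) * (x\<^sup>2 + y\<^sup>2))"
      using e1 by (smt (verit) exp_gt_zero mult_mono abs_ge_self abs_ge_zero mult_right_mono)
    moreover have "C2 * exp (K2 * (x\<^sup>2 + y\<^sup>2)) \<le> \<bar>C2\<bar> * exp ((\<bar>K1\<bar> + \<bar>K2\<bar>) * (x\<^sup>2 + y\<^sup>2))"
      using e2 by (smt (verit) exp_gt_zero mult_mono abs_ge_self abs_ge_zero mult_right_mono)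
    ultimately show ?thesis using b1[of x y] b2[of x y] by (simp add: distrib_right) linarith
  qed
  thus ?thesis using m unfolding gr_def by blast
qed

lemma gr_mult: assumes "gr f" "gr g" shows "gr (\<lambda>x y. f x y * g x y)"
proof -
  obtain C1 K1 C2 K2 where b1: "\<And>x y. \<bar>f x y\<bar> \<le> C1 * exp (K1 * (x\<^sup>2 + y\<^sup>2))"
    and b2: "\<And>x y. \<bar>g x y\<bar> \<le> C2 * exp (K2 * (x\<^sup>2 + y\<^sup>2))"
    using assms unfolding gr_def by blast
  have m: "(\<lambda>p. f (fst p) (snd p) * g (fst p) (snd p)) \<in> borel_measurable lborel"
    using assms unfolding gr_def by (intro borel_measurable_times) auto
  have "\<bar>f x y * g x y\<bar> \<le> (C1 * C2) * exp ((K1 + K2) * (x\<^sup>2 + y\<^sup>2))" for x y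
  proof -
    have "\<bar>f x y * g x y\<bar> = \<bar>f x y\<bar> * \<bar>g x y\<bar>" by (simp add: abs_mult)
    also have "\<dots> \<le> (C1 * exp (K1 * (x\<^sup>2 + y\<^sup>2))) * (C2 * exp (K2 * (x\<^sup>2 + y\<^sup>2)))"
      using b1[of x y] b2[of x y] by (intro mult_mono) auto
    also have "\<dots> = (C1 * C2) * exp ((K1 + K2) * (x\<^sup>2 + y\<^sup>2))"
      by (simp add: exp_add[symmetric] algebra_simps)
    finally show ?thesis .
  qed
  thus ?thesis using m unfolding gr_def by blast
qed

lemma gr_abs: assumes "gr f" shows "gr (\<lambda>x y. \<bar>f x y\<bar>)"
  using assms unfolding gr_def by (auto intro: borel_measurable_abs)

lemma gr_cong: "gr f \<Longrightarrow> (\<And>x y. f x y = g x y) \<Longrightarrow> gr g"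
proof -
  assume "gr f" "\<And>x y. f x y = g x y"
  hence "f = g" by (intro ext) auto
  thus "gr g" using \<open>gr f\<close> by simp
qed

lemma gr_scale: "gr f \<Longrightarrow> gr (\<lambda>x y. c * f x y)"
  using gr_mult[OF gr_const] .

lemma gr_diff: "gr f \<Longrightarrow> gr g \<Longrightarrow> gr (\<lambda>x y. f x y - g x y)"
  using gr_add[of f "\<lambda>x y. (-1) * g x y"] gr_scale[of g "-1"] by simp

lemma gr_pow: "gr f \<Longrightarrow> gr (\<lambda>x y. f x y ^ n)"
  by (induction n) (simp_all add: gr_const gr_mult)

lemma gr_sum: "finite I \<Longrightarrow> (\<And>i. i \<in> I \<Longrightarrow> gr (f i)) \<Longrightarrow> gr (\<lambda>x y. \<Sum>i\<in>I. f i x y)"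
  by (induction I rule: finite_induct) (simp_all add: gr_const gr_add)

lemma gr_r2: "gr (\<lambda>x y. x\<^sup>2 + y\<^sup>2)"
  by (intro gr_add gr_pow gr_x gr_y)

lemma gr_poly: "poly_deg_lt n p \<Longrightarrow> gr p"
proof -
  assume "poly_deg_lt n p"
  then obtain c where c: "\<And>x y. p x y = (\<Sum>(j, k) \<in> {(j, k). j + k < n}. c j k * x ^ j * y ^ k)"
    unfolding poly_deg_lt_def by blast
  have fin: "finite {(j, k). j + k < (n::nat)}"
    by (rule finite_subset[of _ "{..<n} \<times> {..<n}"]) auto
  have "gr (\<lambda>x y. \<Sum>jk \<in> {(j, k). j + k < n}. (\<lambda>jk x y. c (fst jk) (snd jk) * x ^ (fst jk) * y ^ (snd jk)) jk x y)"
    by (intro gr_sum fin gr_mult gr_const gr_pow gr_x gr_y)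
  thus "gr p" by (rule gr_cong) (simp add: c case_prod_beta)
qed

context fixes a40 a22 a04 :: real
begin

abbreviation "WW s x y \<equiv> W a40 a22 a04 s x y"

lemma W_shift: "WW s x y = WW t x y * exp ((s - t) * (x\<^sup>2 + y\<^sup>2))"
  unfolding W_def by (simp add: exp_add[symmetric] algebra_simps)

lemma W_pos: "WW s x y > 0" unfolding W_def by simp

lemma W_sq: "(WW (t + 1) x y)\<^sup>2 = WW (t - 1) x y * WW (t + 3) x y"
  unfolding W_def by (simp add: exp_add[symmetric] power2_eq_square[of "exp _"] algebra_simps)

lemma W_mono: "s \<le> s' \<Longrightarrow> WW s x y \<le> WW s' x y"
  unfolding W_def by (simp add: mult_right_mono)

lemma W_meas: "(\<lambda>p. WW s (fst p) (snd p)) \<in> borel_measurable lborel"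
  unfolding W_def by (simp add: borel_measurable_continuous_onI continuous_intros)

lemma PW1: assumes "\<bar>s - t\<bar> \<le> 1"
  shows "\<bar>WW s x y - WW t x y\<bar> \<le> \<bar>s - t\<bar> * (x\<^sup>2 + y\<^sup>2) * WW (t + 1) x y"
proof -
  define z where "z = (s - t) * (x\<^sup>2 + y\<^sup>2)"
  have r: "x\<^sup>2 + y\<^sup>2 \<ge> 0" by simp
  have az: "\<bar>z\<bar> = \<bar>s - t\<bar> * (x\<^sup>2 + y\<^sup>2)" by (simp add: z_def abs_mult)
  have az1: "\<bar>z\<bar> \<le> x\<^sup>2 + y\<^sup>2" unfolding az using assms r by (simp add: mult_right_le_one_le mult_left_le_one_le)
  have "WW s x y - WW t x y = WW t x y * (exp z - 1)" using W_shift[of s x y t] by (simp add: z_def algebra_simps)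
  hence "\<bar>WW s x y - WW t x y\<bar> = WW t x y * \<bar>exp z - 1\<bar>" using W_pos[of t x y] by (simp add: abs_mult)
  also have "\<dots> \<le> WW t x y * (\<bar>z\<bar> * exp \<bar>z\<bar>)" using W_pos[of t x y] exp_minus_one_bound[of z]
    by (intro mult_left_mono) auto
  also have "\<dots> \<le> WW t x y * (\<bar>z\<bar> * exp (x\<^sup>2 + y\<^sup>2))" using W_pos[of t x y] az1
    by (intro mult_left_mono) auto
  also have "\<dots> = \<bar>s - t\<bar> * (x\<^sup>2 + y\<^sup>2) * WW (t + 1) x y"
    using W_shift[of "t+1" x y t] az by simp
  finally show ?thesis .
qed

lemma PW2: assumes "\<bar>s - t\<bar> \<le> 1"
  shows "\<bar>WW s x y - WW t x y - (s - t) * (x\<^sup>2 + y\<^sup>2) * WW t x y\<bar> \<le> (s - t)\<^sup>2 * (x\<^sup>2 + y\<^sup>2)\<^sup>2 * WW (t + 1) x y"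
proof -
  define z where "z = (s - t) * (x\<^sup>2 + y\<^sup>2)"
  have r: "x\<^sup>2 + y\<^sup>2 \<ge> 0" by simp
  have az: "\<bar>z\<bar> = \<bar>s - t\<bar> * (x\<^sup>2 + y\<^sup>2)" by (simp add: z_def abs_mult)
  have az1: "\<bar>z\<bar> \<le> x\<^sup>2 + y\<^sup>2" unfolding az using assms r by (simp add: mult_right_le_one_le mult_left_le_one_le)
  have "WW s x y - WW t x y - (s - t) * (x\<^sup>2 + y\<^sup>2) * WW t x y = WW t x y * (exp z - 1 - z)"
    using W_shift[of s x y t] by (simp add: z_def algebra_simps)
  hence "\<bar>WW s x y - WW t x y - (s - t) * (x\<^sup>2 + y\<^sup>2) * WW t x y\<bar> = WW t x y * \<bar>exp z - 1 - z\<bar>"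
    using W_pos[of t x y] by (simp add: abs_mult)
  also have "\<dots> \<le> WW t x y * (z\<^sup>2 * exp \<bar>z\<bar>)" using W_pos[of t x y] exp_taylor2_bound[of z]
    by (intro mult_left_mono) auto
  also have "\<dots> \<le> WW t x y * (z\<^sup>2 * exp (x\<^sup>2 + y\<^sup>2))" using W_pos[of t x y] az1
    by (intro mult_left_mono) auto
  also have "\<dots> = (s - t)\<^sup>2 * (x\<^sup>2 + y\<^sup>2)\<^sup>2 * WW (t + 1) x y"
    using W_shift[of "t+1" x y t] by (simp add: z_def power_mult_distrib)
  finally show ?thesis .
qed

end


lemma amgm_W:
  fixes u v w0 w1 w3 :: real
  assumes "w0 > 0" "w1\<^sup>2 = w0 * w3"
  shows "2 * u * v * w1 \<le> u\<^sup>2 * w0 + v\<^sup>2 * w3"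
proof -
  have "w0 * (u\<^sup>2 * w0 + v\<^sup>2 * w3 - 2 * u * v * w1) = (u * w0 - v * w1)\<^sup>2"
    using assms(2) by (simp add: power2_eq_square algebra_simps)
  hence "w0 * (u\<^sup>2 * w0 + v\<^sup>2 * w3 - 2 * u * v * w1) \<ge> 0" by simp
  hence "u\<^sup>2 * w0 + v\<^sup>2 * w3 - 2 * u * v * w1 \<ge> 0" using assms(1) by (simp add: zero_le_mult_iff)
  thus ?thesis by simp
qed

locale wctx = fixes a40 a22 a04 :: real
  assumes Wint: "\<And>s. integrable lborel (\<lambda>p. W a40 a22 a04 s (fst p) (snd p))"
begin

abbreviation "IP s f g \<equiv> ip a40 a22 a04 s f g"

lemma gr_int: assumes "gr f"
  shows "integrable lborel (\<lambda>p. f (fst p) (snd p) * WW a40 a22 a04 s (fst p) (snd p))"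
proof -
  obtain C K where b: "\<And>x y. \<bar>f x y\<bar> \<le> C * exp (K * (x\<^sup>2 + y\<^sup>2))" using assms unfolding gr_def by blast
  have m: "(\<lambda>p. f (fst p) (snd p)) \<in> borel_measurable lborel" using assms unfolding gr_def by blast
  show ?thesis
  proof (rule Bochner_Integration.integrable_bound[where f = "\<lambda>p. C * WW a40 a22 a04 (s + K) (fst p) (snd p)"])
    show "integrable lborel (\<lambda>p. C * WW a40 a22 a04 (s + K) (fst p) (snd p))" using Wint by simp
    show "(\<lambda>p. f (fst p) (snd p) * WW a40 a22 a04 s (fst p) (snd p)) \<in> borel_measurable lborel"
      using m W_meas by (intro borel_measurable_times) auto
    show "AE p in lborel. norm (f (fst p) (snd p) * WW a40 a22 a04 s (fst p) (snd p))
        \<le> norm (C * WW a40 a22 a04 (s + K) (fst p) (snd p))"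
    proof (intro AE_I2)
      fix p :: "real \<times> real"
      obtain x y where p: "p = (x, y)" by fastforce
      have "\<bar>f x y * WW a40 a22 a04 s x y\<bar> = \<bar>f x y\<bar> * WW a40 a22 a04 s x y"
        using W_pos[of a40 a22 a04 s x y] by (simp add: abs_mult)
      also have "\<dots> \<le> C * exp (K * (x\<^sup>2 + y\<^sup>2)) * WW a40 a22 a04 s x y"
        using b[of x y] W_pos[of a40 a22 a04 s x y] by (intro mult_right_mono) auto
      also have "\<dots> = C * WW a40 a22 a04 (s + K) x y"
        using W_shift[of a40 a22 a04 "s + K" x y s] by simp
      also have "\<dots> \<le> \<bar>C * WW a40 a22 a04 (s + K) x y\<bar>" by simp
      finally show "norm (f (fst p) (snd p) * WW a40 a22 a04 s (fst p) (snd p))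
        \<le> norm (C * WW a40 a22 a04 (s + K) (fst p) (snd p))" using p by simp
    qed
  qed
qed

lemma gr_int2: "gr f \<Longrightarrow> gr g \<Longrightarrow>
  integrable lborel (\<lambda>p. f (fst p) (snd p) * g (fst p) (snd p) * WW a40 a22 a04 s (fst p) (snd p))"
  using gr_int[OF gr_mult, of f g s] by simp

lemma ip_sym: "IP s f g = IP s g f"
  unfolding ip_def by (simp add: mult.commute mult.left_commute)

lemma ip_move: "IP s (\<lambda>x y. m x y * f x y) g = IP s f (\<lambda>x y. m x y * g x y)"
  unfolding ip_def by (simp add: mult.commute mult.left_commute)

lemma ip_scale1: "IP s (\<lambda>x y. c * f x y) g = c * IP s f g"
proof -
  have "IP s (\<lambda>x y. c * f x y) g = integral\<^sup>L lborel
     (\<lambda>p. c * (f (fst p) (snd p) * g (fst p) (snd p) * WW a40 a22 a04 s (fst p) (snd p)))"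
    unfolding ip_def by (simp add: mult.assoc)
  thus ?thesis unfolding ip_def by simp
qed

lemma ip_add1: assumes "gr f" "gr f'" "gr g" shows "IP s (\<lambda>x y. f x y + f' x y) g = IP s f g + IP s f' g"
proof -
  have e: "(\<lambda>p. (f (fst p) (snd p) + f' (fst p) (snd p)) * g (fst p) (snd p) * WW a40 a22 a04 s (fst p) (snd p))
    = (\<lambda>p. f (fst p) (snd p) * g (fst p) (snd p) * WW a40 a22 a04 s (fst p) (snd p)
        + f' (fst p) (snd p) * g (fst p) (snd p) * WW a40 a22 a04 s (fst p) (snd p))"
    by (auto simp: algebra_simps)
  show ?thesis unfolding ip_def e by (intro Bochner_Integration.integral_add gr_int2 assms)
qed

lemma ip_diff1: assumes "gr f" "gr f'" "gr g" shows "IP s (\<lambda>x y. f x y - f' x y) g = IP s f g - IP s f' g"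
proof -
  have e: "(\<lambda>p. (f (fst p) (snd p) - f' (fst p) (snd p)) * g (fst p) (snd p) * WW a40 a22 a04 s (fst p) (snd p))
    = (\<lambda>p. f (fst p) (snd p) * g (fst p) (snd p) * WW a40 a22 a04 s (fst p) (snd p)
        - f' (fst p) (snd p) * g (fst p) (snd p) * WW a40 a22 a04 s (fst p) (snd p))"
    by (auto simp: algebra_simps)
  show ?thesis unfolding ip_def e by (intro Bochner_Integration.integral_diff gr_int2 assms)
qed

lemma ip_sum1: "finite I \<Longrightarrow> (\<And>i. i \<in> I \<Longrightarrow> gr (f i)) \<Longrightarrow> gr g \<Longrightarrow>
    IP s (\<lambda>x y. \<Sum>i\<in>I. f i x y) g = (\<Sum>i\<in>I. IP s (f i) g)"
proof (induction I rule: finite_induct)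
  case empty thus ?case unfolding ip_def by simp
next
  case (insert a I)
  have "IP s (\<lambda>x y. \<Sum>i\<in>insert a I. f i x y) g = IP s (\<lambda>x y. f a x y + (\<Sum>i\<in>I. f i x y)) g"
    using insert.hyps by simp
  also have "\<dots> = IP s (f a) g + IP s (\<lambda>x y. \<Sum>i\<in>I. f i x y) g"
    using insert by (intro ip_add1 gr_sum) auto
  finally show ?case using insert by simp
qed

lemma ip_lin1: "finite I \<Longrightarrow> (\<And>i. i \<in> I \<Longrightarrow> gr (f i)) \<Longrightarrow> gr g \<Longrightarrow>
    IP s (\<lambda>x y. \<Sum>i\<in>I. c i * f i x y) g = (\<Sum>i\<in>I. c i * IP s (f i) g)"
  using ip_sum1[of I "\<lambda>i x y. c i * f i x y" g s] by (simp add: gr_scale ip_scale1)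

lemma ip_lin2: "finite I \<Longrightarrow> (\<And>i. i \<in> I \<Longrightarrow> gr (f i)) \<Longrightarrow> gr g \<Longrightarrow>
    IP s g (\<lambda>x y. \<Sum>i\<in>I. c i * f i x y) = (\<Sum>i\<in>I. c i * IP s g (f i))"
  using ip_lin1[of I f g s c] by (simp add: ip_sym[of s g])

lemma ip_sum2: "finite I \<Longrightarrow> (\<And>i. i \<in> I \<Longrightarrow> gr (f i)) \<Longrightarrow> gr g \<Longrightarrow>
    IP s g (\<lambda>x y. \<Sum>i\<in>I. f i x y) = (\<Sum>i\<in>I. IP s g (f i))"
  using ip_sum1[of I f g s] by (simp add: ip_sym[of s g])

lemma ip_add2: "gr f \<Longrightarrow> gr f' \<Longrightarrow> gr g \<Longrightarrow> IP s g (\<lambda>x y. f x y + f' x y) = IP s g f + IP s g f'"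
  using ip_add1[of f f' g s] by (simp add: ip_sym[of s g])

lemma ip_diff2: "gr f \<Longrightarrow> gr f' \<Longrightarrow> gr g \<Longrightarrow> IP s g (\<lambda>x y. f x y - f' x y) = IP s g f - IP s g f'"
  using ip_diff1[of f f' g s] by (simp add: ip_sym[of s g])

lemma ip_scale2: "IP s g (\<lambda>x y. c * f x y) = c * IP s g f"
  using ip_scale1[of s c f g] by (simp add: ip_sym[of s g])

lemma ip_nonneg: "IP s f f \<ge> 0"
  unfolding ip_def by (intro Bochner_Integration.integral_nonneg mult_nonneg_nonneg zero_le_square less_imp_le[OF W_pos])

lemma ip_mono_weight: assumes "gr f" "s \<le> s'" shows "IP s f f \<le> IP s' f f"
  unfolding ip_def using assms W_mono[of s s' a40 a22 a04]
  by (intro integral_mono gr_int2) (auto intro!: mult_left_mono)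

lemma ip_weight_diff: assumes "gr f" "gr g" shows "IP s f g - IP t f g =
   integral\<^sup>L lborel (\<lambda>p. f (fst p) (snd p) * g (fst p) (snd p) *
       (WW a40 a22 a04 s (fst p) (snd p) - WW a40 a22 a04 t (fst p) (snd p)))"
proof -
  have e: "(\<lambda>p. f (fst p) (snd p) * g (fst p) (snd p) *
       (WW a40 a22 a04 s (fst p) (snd p) - WW a40 a22 a04 t (fst p) (snd p))) =
     (\<lambda>p. f (fst p) (snd p) * g (fst p) (snd p) * WW a40 a22 a04 s (fst p) (snd p) -
       f (fst p) (snd p) * g (fst p) (snd p) * WW a40 a22 a04 t (fst p) (snd p))"
    by (auto simp: algebra_simps)
  show ?thesis unfolding ip_def e by (intro Bochner_Integration.integral_diff[symmetric] gr_int2 assms)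
qed

lemma DR: assumes f: "gr f" and g: "gr g" and st: "\<bar>s - t\<bar> \<le> 1"
  shows "\<bar>IP s f g - IP t f g - (s - t) * IP t (\<lambda>x y. (x\<^sup>2 + y\<^sup>2) * f x y) g\<bar>
     \<le> (s - t)\<^sup>2 * IP (t + 1) (\<lambda>x y. \<bar>f x y * g x y\<bar> * (x\<^sup>2 + y\<^sup>2)\<^sup>2) (\<lambda>x y. 1)"
proof -
  let ?w = "\<lambda>s p. WW a40 a22 a04 s (fst p) (snd p)"
  let ?fg = "\<lambda>p. f (fst p) (snd p) * g (fst p) (snd p)"
  let ?r = "\<lambda>p. (fst p)\<^sup>2 + (snd p)\<^sup>2"
  have i1: "integrable lborel (\<lambda>p. ?fg p * ?w s p)" using gr_int2[OF f g] by simp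
  have i2: "integrable lborel (\<lambda>p. ?fg p * ?w t p)" using gr_int2[OF f g] by simp
  have i3: "integrable lborel (\<lambda>p. (s - t) * (?r p * f (fst p) (snd p) * g (fst p) (snd p) * ?w t p))"
    using gr_int2[OF gr_mult[OF gr_r2 f] g, of t] by simp
  have i12: "integrable lborel (\<lambda>p. ?fg p * ?w s p - ?fg p * ?w t p)" using i1 i2 by simp
  have "IP s f g - IP t f g - (s - t) * IP t (\<lambda>x y. (x\<^sup>2 + y\<^sup>2) * f x y) g
     = integral\<^sup>L lborel (\<lambda>p. ?fg p * ?w s p) - integral\<^sup>L lborel (\<lambda>p. ?fg p * ?w t p)
       - integral\<^sup>L lborel (\<lambda>p. (s - t) * (?r p * f (fst p) (snd p) * g (fst p) (snd p) * ?w t p))"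
    unfolding ip_def by (simp only: integral_mult_right_zero)
  also have "\<dots> = integral\<^sup>L lborel (\<lambda>p. ?fg p * ?w s p - ?fg p * ?w t p)
       - integral\<^sup>L lborel (\<lambda>p. (s - t) * (?r p * f (fst p) (snd p) * g (fst p) (snd p) * ?w t p))"
    by (simp only: Bochner_Integration.integral_diff[OF i1 i2])
  also have "\<dots> = integral\<^sup>L lborel (\<lambda>p. ?fg p * ?w s p - ?fg p * ?w t p - (s - t) * (?r p * f (fst p) (snd p) * g (fst p) (snd p) * ?w t p))"
    by (simp only: Bochner_Integration.integral_diff[OF i12 i3])
  also have "\<dots> = integral\<^sup>L lborel (\<lambda>p. ?fg p * (?w s p - ?w t p - (s - t) * ?r p * ?w t p))"
    by (intro Bochner_Integration.integral_cong) (auto simp: algebra_simps)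
  finally have eq: "IP s f g - IP t f g - (s - t) * IP t (\<lambda>x y. (x\<^sup>2 + y\<^sup>2) * f x y) g =
    integral\<^sup>L lborel (\<lambda>p. ?fg p * (?w s p - ?w t p - (s - t) * ?r p * ?w t p))" .
  have gb: "gr (\<lambda>x y. \<bar>f x y * g x y\<bar> * (x\<^sup>2 + y\<^sup>2)\<^sup>2)" by (intro gr_mult gr_abs gr_pow gr_r2 f g)
  have ib: "integrable lborel (\<lambda>p. (s - t)\<^sup>2 * (\<bar>?fg p\<bar> * (?r p)\<^sup>2 * 1 * ?w (t + 1) p))"
    using gr_int[OF gb, of "t + 1"] by simp
  have ic0: "integrable lborel (\<lambda>p. ?fg p * ?w s p - ?fg p * ?w t p - (s - t) * (?r p * f (fst p) (snd p) * g (fst p) (snd p) * ?w t p))"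
    using i12 i3 by (rule Bochner_Integration.integrable_diff)
  have feq: "(\<lambda>p. ?fg p * (?w s p - ?w t p - (s - t) * ?r p * ?w t p)) =
      (\<lambda>p. ?fg p * ?w s p - ?fg p * ?w t p - (s - t) * (?r p * f (fst p) (snd p) * g (fst p) (snd p) * ?w t p))"
    by (rule ext) (simp add: algebra_simps)
  have ic: "integrable lborel (\<lambda>p. ?fg p * (?w s p - ?w t p - (s - t) * ?r p * ?w t p))"
    using ic0 feq by simp
  have "\<bar>integral\<^sup>L lborel (\<lambda>p. ?fg p * (?w s p - ?w t p - (s - t) * ?r p * ?w t p))\<bar>
     \<le> integral\<^sup>L lborel (\<lambda>p. (s - t)\<^sup>2 * (\<bar>?fg p\<bar> * (?r p)\<^sup>2 * 1 * ?w (t + 1) p))"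
  proof (rule integral_abs_bound_integral[OF ic ib])
    fix p :: "real \<times> real"
    have "\<bar>?fg p * (?w s p - ?w t p - (s - t) * ?r p * ?w t p)\<bar>
       = \<bar>?fg p\<bar> * \<bar>?w s p - ?w t p - (s - t) * ?r p * ?w t p\<bar>" by (simp add: abs_mult)
    also have "\<dots> \<le> \<bar>?fg p\<bar> * ((s - t)\<^sup>2 * (?r p)\<^sup>2 * ?w (t + 1) p)"
      using PW2[OF st, of a40 a22 a04 "fst p" "snd p"] by (intro mult_left_mono) auto
    finally show "\<bar>?fg p * (?w s p - ?w t p - (s - t) * ?r p * ?w t p)\<bar>
      \<le> (s - t)\<^sup>2 * (\<bar>?fg p\<bar> * (?r p)\<^sup>2 * 1 * ?w (t + 1) p)" by (simp add: algebra_simps)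
  qed
  also have "\<dots> = (s - t)\<^sup>2 * IP (t + 1) (\<lambda>x y. \<bar>f x y * g x y\<bar> * (x\<^sup>2 + y\<^sup>2)\<^sup>2) (\<lambda>x y. 1)"
    unfolding ip_def by simp
  finally show ?thesis using eq by simp
qed

lemma ip_deriv: assumes "gr f" "gr g" shows
   "((\<lambda>s. IP s f g) has_real_derivative IP t (\<lambda>x y. (x\<^sup>2 + y\<^sup>2) * f x y) g) (at t)"
proof (rule deriv_from_bound)
  fix s assume "\<bar>s - t\<bar> \<le> 1"
  from DR[OF assms this] show "\<bar>IP s f g - IP t f g - (s - t) * IP t (\<lambda>x y. (x\<^sup>2 + y\<^sup>2) * f x y) g\<bar>
    \<le> IP (t + 1) (\<lambda>x y. \<bar>f x y * g x y\<bar> * (x\<^sup>2 + y\<^sup>2)\<^sup>2) (\<lambda>x y. 1) * (s - t)\<^sup>2"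
    by (simp add: mult.commute)
qed

lemma AMGM_int: assumes D: "gr D" and P: "gr P"
  shows "integral\<^sup>L lborel (\<lambda>p. \<bar>D (fst p) (snd p)\<bar> * \<bar>P (fst p) (snd p)\<bar> * \<bar>h\<bar> * ((fst p)\<^sup>2 + (snd p)\<^sup>2)
            * WW a40 a22 a04 (t + 1) (fst p) (snd p))
     \<le> IP (t - 1) D D / 2 + h\<^sup>2 / 2 * IP (t + 3) (\<lambda>x y. (x\<^sup>2 + y\<^sup>2) * P x y) (\<lambda>x y. (x\<^sup>2 + y\<^sup>2) * P x y)"
proof -
  let ?w = "\<lambda>s p. WW a40 a22 a04 s (fst p) (snd p)"
  let ?r = "\<lambda>p. (fst p)\<^sup>2 + (snd p)\<^sup>2"
  have g1: "gr (\<lambda>x y. \<bar>D x y\<bar> * \<bar>P x y\<bar> * \<bar>h\<bar> * (x\<^sup>2 + y\<^sup>2))"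
    by (intro gr_mult gr_abs gr_const gr_r2 D P)
  have i1: "integrable lborel (\<lambda>p. \<bar>D (fst p) (snd p)\<bar> * \<bar>P (fst p) (snd p)\<bar> * \<bar>h\<bar> * ?r p * ?w (t + 1) p)"
    using gr_int[OF g1, of "t + 1"] by simp
  have i2: "integrable lborel (\<lambda>p. D (fst p) (snd p) * D (fst p) (snd p) * ?w (t - 1) p / 2)"
    using gr_int2[OF D D, of "t - 1"] by simp
  have i3: "integrable lborel (\<lambda>p. h\<^sup>2 / 2 * (?r p * P (fst p) (snd p) * (?r p * P (fst p) (snd p)) * ?w (t + 3) p))"
    using gr_int2[OF gr_mult[OF gr_r2 P] gr_mult[OF gr_r2 P], of "t + 3"] by simp
  have "integral\<^sup>L lborel (\<lambda>p. \<bar>D (fst p) (snd p)\<bar> * \<bar>P (fst p) (snd p)\<bar> * \<bar>h\<bar> * ?r p * ?w (t + 1) p)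
    \<le> integral\<^sup>L lborel (\<lambda>p. D (fst p) (snd p) * D (fst p) (snd p) * ?w (t - 1) p / 2
          + h\<^sup>2 / 2 * (?r p * P (fst p) (snd p) * (?r p * P (fst p) (snd p)) * ?w (t + 3) p))"
  proof (rule integral_mono[OF i1 Bochner_Integration.integrable_add[OF i2 i3]])
    fix p :: "real \<times> real"
    let ?u = "\<bar>D (fst p) (snd p)\<bar>" and ?v = "\<bar>h\<bar> * ?r p * \<bar>P (fst p) (snd p)\<bar>"
    have "2 * ?u * ?v * ?w (t + 1) p \<le> ?u\<^sup>2 * ?w (t - 1) p + ?v\<^sup>2 * ?w (t + 3) p"
      by (rule amgm_W[OF W_pos W_sq])
    moreover have "?u\<^sup>2 = D (fst p) (snd p) * D (fst p) (snd p)" by (simp add: power2_eq_square)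
    moreover have "?v\<^sup>2 = h\<^sup>2 * (?r p * P (fst p) (snd p) * (?r p * P (fst p) (snd p)))"
      by (simp add: power2_eq_square algebra_simps)
    ultimately show "\<bar>D (fst p) (snd p)\<bar> * \<bar>P (fst p) (snd p)\<bar> * \<bar>h\<bar> * ?r p * ?w (t + 1) p
      \<le> D (fst p) (snd p) * D (fst p) (snd p) * ?w (t - 1) p / 2
          + h\<^sup>2 / 2 * (?r p * P (fst p) (snd p) * (?r p * P (fst p) (snd p)) * ?w (t + 3) p)"
      by (simp add: algebra_simps)
  qed
  also have "\<dots> = IP (t - 1) D D / 2 + h\<^sup>2 / 2 * IP (t + 3) (\<lambda>x y. (x\<^sup>2 + y\<^sup>2) * P x y) (\<lambda>x y. (x\<^sup>2 + y\<^sup>2) * P x y)"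
    unfolding ip_def by (simp only: Bochner_Integration.integral_add[OF i2 i3] integral_divide_zero integral_mult_right_zero)
  finally show ?thesis .
qed


lemma WD: assumes D: "gr D" and P: "gr P" and st: "\<bar>s - t\<bar> \<le> 1"
  shows "\<bar>IP s D P - IP t D P\<bar> \<le> IP (t - 1) D D / 2
     + (s - t)\<^sup>2 / 2 * IP (t + 3) (\<lambda>x y. (x\<^sup>2 + y\<^sup>2) * P x y) (\<lambda>x y. (x\<^sup>2 + y\<^sup>2) * P x y)"
proof -
  let ?w = "\<lambda>s p. WW a40 a22 a04 s (fst p) (snd p)"
  let ?r = "\<lambda>p. (fst p)\<^sup>2 + (snd p)\<^sup>2"
  have g1: "gr (\<lambda>x y. \<bar>D x y\<bar> * \<bar>P x y\<bar> * \<bar>s - t\<bar> * (x\<^sup>2 + y\<^sup>2))"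
    by (intro gr_mult gr_abs gr_const gr_r2 D P)
  have i1: "integrable lborel (\<lambda>p. \<bar>D (fst p) (snd p)\<bar> * \<bar>P (fst p) (snd p)\<bar> * \<bar>s - t\<bar> * ?r p * ?w (t + 1) p)"
    using gr_int[OF g1, of "t + 1"] by simp
  have i0: "integrable lborel (\<lambda>p. D (fst p) (snd p) * P (fst p) (snd p) * (?w s p - ?w t p))"
  proof -
    have "integrable lborel (\<lambda>p. D (fst p) (snd p) * P (fst p) (snd p) * ?w s p - D (fst p) (snd p) * P (fst p) (snd p) * ?w t p)"
      by (intro Bochner_Integration.integrable_diff gr_int2 D P)
    thus ?thesis by (simp add: algebra_simps)
  qed
  have "\<bar>IP s D P - IP t D P\<bar> = \<bar>integral\<^sup>L lborel (\<lambda>p. D (fst p) (snd p) * P (fst p) (snd p) * (?w s p - ?w t p))\<bar>"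
    using ip_weight_diff[OF D P] by simp
  also have "\<dots> \<le> integral\<^sup>L lborel (\<lambda>p. \<bar>D (fst p) (snd p)\<bar> * \<bar>P (fst p) (snd p)\<bar> * \<bar>s - t\<bar> * ?r p * ?w (t + 1) p)"
  proof (rule integral_abs_bound_integral[OF i0 i1])
    fix p :: "real \<times> real"
    have "\<bar>D (fst p) (snd p) * P (fst p) (snd p) * (?w s p - ?w t p)\<bar>
      = \<bar>D (fst p) (snd p)\<bar> * \<bar>P (fst p) (snd p)\<bar> * \<bar>?w s p - ?w t p\<bar>" by (simp add: abs_mult)
    also have "\<dots> \<le> \<bar>D (fst p) (snd p)\<bar> * \<bar>P (fst p) (snd p)\<bar> * (\<bar>s - t\<bar> * ?r p * ?w (t + 1) p)"
      using PW1[OF st, of a40 a22 a04 "fst p" "snd p"] by (intro mult_left_mono) auto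
    finally show "\<bar>D (fst p) (snd p) * P (fst p) (snd p) * (?w s p - ?w t p)\<bar>
      \<le> \<bar>D (fst p) (snd p)\<bar> * \<bar>P (fst p) (snd p)\<bar> * \<bar>s - t\<bar> * ?r p * ?w (t + 1) p" by (simp add: mult.assoc)
  qed
  also have "\<dots> \<le> IP (t - 1) D D / 2 + (s - t)\<^sup>2 / 2 * IP (t + 3) (\<lambda>x y. (x\<^sup>2 + y\<^sup>2) * P x y) (\<lambda>x y. (x\<^sup>2 + y\<^sup>2) * P x y)"
    using AMGM_int[OF D P, of "s - t" t] by simp
  finally show ?thesis .
qed

end


lemma pdl_add: assumes "poly_deg_lt n f" "poly_deg_lt n g" shows "poly_deg_lt n (\<lambda>x y. f x y + g x y)"
proof -
  obtain c1 where c1: "\<And>x y. f x y = (\<Sum>(j, k) \<in> {(j, k). j + k < n}. c1 j k * x ^ j * y ^ k)"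
    using assms(1) unfolding poly_deg_lt_def by blast
  obtain c2 where c2: "\<And>x y. g x y = (\<Sum>(j, k) \<in> {(j, k). j + k < n}. c2 j k * x ^ j * y ^ k)"
    using assms(2) unfolding poly_deg_lt_def by blast
  show ?thesis unfolding poly_deg_lt_def
    by (rule exI[of _ "\<lambda>j k. c1 j k + c2 j k"]) (simp add: c1 c2 sum.distrib[symmetric] case_prod_beta algebra_simps)
qed

lemma pdl_scale: assumes "poly_deg_lt n f" shows "poly_deg_lt n (\<lambda>x y. a * f x y)"
proof -
  obtain c1 where c1: "\<And>x y. f x y = (\<Sum>(j, k) \<in> {(j, k). j + k < n}. c1 j k * x ^ j * y ^ k)"
    using assms(1) unfolding poly_deg_lt_def by blast
  show ?thesis unfolding poly_deg_lt_def
    by (rule exI[of _ "\<lambda>j k. a * c1 j k"]) (simp add: c1 sum_distrib_left case_prod_beta algebra_simps)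
qed

lemma pdl_zero: "poly_deg_lt n (\<lambda>x y. 0)"
  unfolding poly_deg_lt_def by (rule exI[of _ "\<lambda>j k. 0"]) simp

lemma pdl_cong: "poly_deg_lt n f \<Longrightarrow> (\<And>x y. f x y = g x y) \<Longrightarrow> poly_deg_lt n g"
proof -
  assume "poly_deg_lt n f" "\<And>x y. f x y = g x y"
  hence "f = g" by (intro ext) auto
  thus "poly_deg_lt n g" using \<open>poly_deg_lt n f\<close> by simp
qed

lemma pdl_diff: "poly_deg_lt n f \<Longrightarrow> poly_deg_lt n g \<Longrightarrow> poly_deg_lt n (\<lambda>x y. f x y - g x y)"
  using pdl_add[of n f "\<lambda>x y. (-1) * g x y"] pdl_scale[of n g "-1"] by simp

lemma pdl_sum: "finite I \<Longrightarrow> (\<And>i. i \<in> I \<Longrightarrow> poly_deg_lt n (f i)) \<Longrightarrow> poly_deg_lt n (\<lambda>x y. \<Sum>i\<in>I. f i x y)"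
  by (induction I rule: finite_induct) (simp_all add: pdl_zero pdl_add)

lemma fin_pairs: "finite {(j, k). j + k < (n::nat)}"
  by (rule finite_subset[of _ "{..<n} \<times> {..<n}"]) auto

lemma pdl_mono: assumes "poly_deg_lt n f" "n \<le> m" shows "poly_deg_lt m f"
proof -
  obtain c where c: "\<And>x y. f x y = (\<Sum>(j, k) \<in> {(j, k). j + k < n}. c j k * x ^ j * y ^ k)"
    using assms(1) unfolding poly_deg_lt_def by blast
  show ?thesis unfolding poly_deg_lt_def
  proof (intro exI[of _ "\<lambda>j k. if j + k < n then c j k else 0"] allI)
    fix x y :: real
    have "(\<Sum>(j, k) \<in> {(j, k). j + k < m}. (if j + k < n then c j k else 0) * x ^ j * y ^ k)
        = (\<Sum>(j, k) \<in> {(j, k). j + k < n}. (if j + k < n then c j k else 0) * x ^ j * y ^ k)"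
      using assms(2) by (intro sum.mono_neutral_right fin_pairs) (auto split: if_splits)
    also have "\<dots> = (\<Sum>(j, k) \<in> {(j, k). j + k < n}. c j k * x ^ j * y ^ k)"
      by (intro sum.cong) auto
    finally show "f x y = (\<Sum>(j, k) \<in> {(j, k). j + k < m}. (if j + k < n then c j k else 0) * x ^ j * y ^ k)"
      using c by simp
  qed
qed

lemma pdl_monomial: assumes "a + b < n" shows "poly_deg_lt n (\<lambda>x y. x ^ a * y ^ b)"
  unfolding poly_deg_lt_def
proof (intro exI[of _ "\<lambda>j k. if j = a \<and> k = b then 1 else 0"] allI)
  fix x y :: real
  have "(\<Sum>(j, k) \<in> {(j, k). j + k < n}. (if j = a \<and> k = b then 1 else 0) * x ^ j * y ^ k)
      = (\<Sum>p \<in> {(j, k). j + k < n}. if p = (a, b) then x ^ a * y ^ b else 0)"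
    by (intro sum.cong) (auto split: if_splits)
  also have "\<dots> = x ^ a * y ^ b" using assms fin_pairs[of n] by (simp add: sum.delta)
  finally show "x ^ a * y ^ b = (\<Sum>(j, k) \<in> {(j, k). j + k < n}. (if j = a \<and> k = b then 1 else 0) * x ^ j * y ^ k)"
    by simp
qed


lemma sum_delta_left: "(\<Sum>k\<in>A. (if k = i then 1 else 0) * (f k :: real)) = (if finite A \<and> i \<in> A then f i else 0)"
proof -
  have "(\<Sum>k\<in>A. (if k = i then 1 else 0) * f k) = (\<Sum>k\<in>A. if k = i then f k else 0)"
    by (intro sum.cong) auto
  thus ?thesis by (cases "finite A") (simp_all add: sum.delta')
qed

lemma sum_delta_right: "(\<Sum>k\<in>A. (f k :: real) * (if p = k then 1 else 0)) = (if finite A \<and> p \<in> A then f p else 0)"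
proof -
  have "(\<Sum>k\<in>A. f k * (if p = k then 1 else 0)) = (\<Sum>k\<in>A. if p = k then f k else 0)"
    by (intro sum.cong) auto
  thus ?thesis by (cases "finite A") (simp_all add: sum.delta)
qed

lemma sum_delta_right2: "(\<Sum>k\<in>{0..<N}. (f k :: real) * (if p = Suc k then 1 else 0)) = (if 0 < p \<and> p \<le> N then f (p - 1) else 0)"
proof -
  have "(\<Sum>k\<in>{0..<N}. f k * (if p = Suc k then 1 else 0)) = (\<Sum>k\<in>{0..<N}. if k = p - 1 \<and> 0 < p then f k else 0)"
    by (intro sum.cong) auto
  also have "\<dots> = (\<Sum>k\<in>{0..<N}. if k = p - 1 then (if 0 < p then f k else 0) else 0)"
    by (intro sum.cong) auto
  also have "\<dots> = (if 0 < p \<and> p \<le> N then f (p - 1) else 0)" by (auto simp: sum.delta)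
  finally show ?thesis .
qed

lemma L1_dims[simp]: "dim_row (L1 N) = Suc N" "dim_col (L1 N) = Suc (Suc N)"
  unfolding L1_def by simp_all
lemma L2_dims[simp]: "dim_row (L2 N) = Suc N" "dim_col (L2 N) = Suc (Suc N)"
  unfolding L2_def by simp_all
lemma L1_idx[simp]: "i < Suc N \<Longrightarrow> k < Suc (Suc N) \<Longrightarrow> L1 N $$ (i, k) = (if k = i then 1 else 0)"
  unfolding L1_def by simp
lemma L2_idx[simp]: "i < Suc N \<Longrightarrow> k < Suc (Suc N) \<Longrightarrow> L2 N $$ (i, k) = (if k = Suc i then 1 else 0)"
  unfolding L2_def by simp

lemma Vmat_carrier:
  assumes "E1 N \<in> carrier_mat (Suc N) N" "E1 (Suc N) \<in> carrier_mat (Suc (Suc N)) (Suc N)"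
    "E2 N \<in> carrier_mat (Suc N) N" "E2 (Suc N) \<in> carrier_mat (Suc (Suc N)) (Suc N)"
  shows "Vmat E1 E2 (Suc N) \<in> carrier_mat (Suc N) (Suc N)"
  using assms by (cases N) (auto simp: Vmat_def Let_def)

lemma Vmat_entry:
  assumes c: "E1 N \<in> carrier_mat (Suc N) N" "E1 (Suc N) \<in> carrier_mat (Suc (Suc N)) (Suc N)"
    "E2 N \<in> carrier_mat (Suc N) N" "E2 (Suc N) \<in> carrier_mat (Suc (Suc N)) (Suc N)"
    and ip: "i \<le> N" "p \<le> N"
  shows "Vmat E1 E2 (Suc N) $$ (i, p) = E1 (Suc N) $$ (i, p) + E2 (Suc N) $$ (Suc i, p)
     + (if p < N then E1 N $$ (i, p) else 0) + (if 0 < p then E2 N $$ (i, p - 1) else 0)"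
proof -
  have a1: "(L1 N * E1 (Suc N)) $$ (i, p) = E1 (Suc N) $$ (i, p)"
    using c ip by (simp add: scalar_prod_def sum_delta_left)
  have a2: "(L2 N * E2 (Suc N)) $$ (i, p) = E2 (Suc N) $$ (Suc i, p)"
  proof -
    have "(L2 N * E2 (Suc N)) $$ (i, p) = (\<Sum>k\<in>{0..<Suc (Suc N)}. (if k = Suc i then 1 else 0) * E2 (Suc N) $$ (k, p))"
      using c ip by (simp add: scalar_prod_def)
    also have "\<dots> = E2 (Suc N) $$ (Suc i, p)" using ip by (simp add: sum_delta_left)
    finally show ?thesis .
  qed
  show ?thesis
  proof (cases N)
    case 0
    thus ?thesis using a1 a2 c ip by (simp add: Vmat_def Let_def)
  next
    case (Suc M)
    have b1: "(E1 N * L1 M) $$ (i, p) = (if p < N then E1 N $$ (i, p) else 0)"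
    proof -
      have "(E1 N * L1 M) $$ (i, p) = (\<Sum>k\<in>{0..<N}. E1 N $$ (i, k) * (if p = k then 1 else 0))"
        using c ip Suc by (intro trans[OF index_mult_mat(1)]) (auto simp: scalar_prod_def intro!: sum.cong)
      thus ?thesis by (simp add: sum_delta_right)
    qed
    have b2: "(E2 N * L2 M) $$ (i, p) = (if 0 < p then E2 N $$ (i, p - 1) else 0)"
    proof -
      have "(E2 N * L2 M) $$ (i, p) = (\<Sum>k\<in>{0..<N}. E2 N $$ (i, k) * (if p = Suc k then 1 else 0))"
        using c ip Suc by (intro trans[OF index_mult_mat(1)]) (auto simp: scalar_prod_def intro!: sum.cong)
      thus ?thesis using ip by (simp add: sum_delta_right2)
    qed
    have "Vmat E1 E2 (Suc N) = L1 N * E1 (Suc N) + L2 N * E2 (Suc N) + (E1 N * L1 M + E2 N * L2 M)"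
      using Suc by (simp add: Vmat_def Let_def)
    thus ?thesis using a1 a2 b1 b2 c ip Suc by simp
  qed
qed

locale ops_ctx =
  fixes a40 a22 a04 :: real and Q :: "real \<Rightarrow> nat \<Rightarrow> nat \<Rightarrow> real \<Rightarrow> real \<Rightarrow> real"
    and E1 E2 :: "real \<Rightarrow> nat \<Rightarrow> real mat"
  assumes ops: "\<And>s. monic_OPS a40 a22 a04 s (Q s)"
    and tt: "\<And>s. three_term (Q s) (E1 s) (E2 s)"
begin

lemma monic: "i \<le> n \<Longrightarrow> poly_deg_lt n (\<lambda>x y. Q s n i x y - x ^ (n - i) * y ^ i)"
  using ops[of s] unfolding monic_OPS_def by blast

lemma orthQ: "n \<noteq> m \<Longrightarrow> i \<le> n \<Longrightarrow> j \<le> m \<Longrightarrow> ip a40 a22 a04 s (Q s n i) (Q s m j) = 0"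
  using ops[of s] unfolding monic_OPS_def by blast

lemma posdef: "(\<exists>i\<le>n. v i \<noteq> 0) \<Longrightarrow>
    (\<Sum>i\<le>n. \<Sum>j\<le>n. v i * v j * ip a40 a22 a04 s (Q s n i) (Q s n j)) > 0"
  using ops[of s] unfolding monic_OPS_def by blast

lemma Q00: "Q s 0 0 x y = 1"
proof -
  obtain c where c: "\<And>x y. Q s 0 0 x y - x ^ (0 - 0) * y ^ 0 = (\<Sum>(j, k) \<in> {(j, k). j + k < (0::nat)}. c j k * x ^ j * y ^ k)"
    using monic[of 0 0 s] unfolding poly_deg_lt_def by blast
  have "{(j, k). j + k < (0::nat)} = {}" by auto
  thus ?thesis using c[of x y] by simp
qed

lemma Wint: "integrable lborel (\<lambda>p. W a40 a22 a04 s (fst p) (snd p))"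
proof -
  have "(\<Sum>i\<le>0. \<Sum>j\<le>0. (\<lambda>_. 1::real) i * (\<lambda>_. 1) j * ip a40 a22 a04 s (Q s 0 i) (Q s 0 j)) > 0"
    by (rule posdef) auto
  hence "ip a40 a22 a04 s (Q s 0 0) (Q s 0 0) \<noteq> 0" by simp
  hence "integrable lborel (\<lambda>p. Q s 0 0 (fst p) (snd p) * Q s 0 0 (fst p) (snd p) * W a40 a22 a04 s (fst p) (snd p))"
    unfolding ip_def using not_integrable_integral_eq by blast
  thus ?thesis by (simp add: Q00)
qed

sublocale wctx a40 a22 a04 by unfold_locales (rule Wint)

lemma pdl_Q: assumes "j \<le> m" shows "poly_deg_lt (Suc m) (Q s m j)"
proof -
  have "poly_deg_lt (Suc m) (\<lambda>x y. (Q s m j x y - x ^ (m - j) * y ^ j) + x ^ (m - j) * y ^ j)"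
    using assms by (intro pdl_add pdl_mono[OF monic] pdl_monomial) auto
  thus ?thesis by simp
qed

lemma gr_Q: "j \<le> m \<Longrightarrow> gr (Q s m j)"
  using gr_poly[OF pdl_Q] .

lemma pdl_QD: assumes "j \<le> m" shows "poly_deg_lt m (\<lambda>x y. Q s m j x y - Q t m j x y)"
proof -
  have "poly_deg_lt m (\<lambda>x y. (Q s m j x y - x ^ (m - j) * y ^ j) - (Q t m j x y - x ^ (m - j) * y ^ j))"
    using assms by (intro pdl_diff monic)
  thus ?thesis by simp
qed

lemma span: "poly_deg_lt n p \<Longrightarrow> \<exists>c. \<forall>x y. p x y = (\<Sum>m<n. \<Sum>j\<le>m. c m j * Q s m j x y)"
proof (induction n arbitrary: p)
  case 0
  then obtain c where c: "\<And>x y. p x y = (\<Sum>(j, k) \<in> {(j, k). j + k < (0::nat)}. c j k * x ^ j * y ^ k)"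
    unfolding poly_deg_lt_def by blast
  have "{(j, k). j + k < (0::nat)} = {}" by auto
  thus ?case using c by simp
next
  case (Suc n)
  obtain cp where cp: "\<And>x y. p x y = (\<Sum>(j, k) \<in> {(j, k). j + k < Suc n}. cp j k * x ^ j * y ^ k)"
    using Suc.prems unfolding poly_deg_lt_def by blast
  let ?S = "{(j, k). j + k < n}" and ?T = "(\<lambda>i. (n - i, i)) ` {..n}"
  have split: "{(j, k). j + k < Suc n} = ?S \<union> ?T"
  proof (intro equalityI subsetI)
    fix z assume "z \<in> {(j, k). j + k < Suc n}"
    then obtain j k where z: "z = (j, k)" "j + k < Suc n" by auto
    show "z \<in> ?S \<union> ?T"
    proof (cases "j + k < n")
      case True thus ?thesis using z by auto
    next
      case False
      hence "j = n - k" "k \<le> n" using z by auto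
      thus ?thesis using z by auto
    qed
  qed auto
  have disj: "?S \<inter> ?T = {}" by auto
  have finT: "finite ?T" by simp
  have inj: "inj_on (\<lambda>i. (n - i, i)) {..n}" by (intro inj_onI) auto
  define low where "low = (\<lambda>x y. \<Sum>(j, k) \<in> ?S. cp j k * x ^ j * y ^ k)"
  have low: "poly_deg_lt n low" unfolding poly_deg_lt_def low_def by blast
  have p_eq: "p x y = low x y + (\<Sum>i\<le>n. cp (n - i) i * x ^ (n - i) * y ^ i)" for x y
  proof -
    have "p x y = (\<Sum>(j, k) \<in> ?S. cp j k * x ^ j * y ^ k) + (\<Sum>(j, k) \<in> ?T. cp j k * x ^ j * y ^ k)"
      unfolding cp split by (rule sum.union_disjoint[OF fin_pairs finT disj])
    also have "(\<Sum>(j, k) \<in> ?T. cp j k * x ^ j * y ^ k) = (\<Sum>i\<le>n. cp (n - i) i * x ^ (n - i) * y ^ i)"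
      by (subst sum.reindex[OF inj]) simp
    finally show ?thesis unfolding low_def by simp
  qed
  define g where "g = (\<lambda>x y. low x y - (\<Sum>i\<le>n. cp (n - i) i * (Q s n i x y - x ^ (n - i) * y ^ i)))"
  have "poly_deg_lt n g" unfolding g_def
    by (intro pdl_diff low pdl_sum pdl_scale monic) auto
  then obtain c where c: "\<And>x y. g x y = (\<Sum>m<n. \<Sum>j\<le>m. c m j * Q s m j x y)"
    using Suc.IH by blast
  define c' where "c' = (\<lambda>m j. if m = n then cp (n - j) j else c m j)"
  show ?case
  proof (intro exI[of _ c'] allI)
    fix x y
    have "(\<Sum>m<Suc n. \<Sum>j\<le>m. c' m j * Q s m j x y)
        = (\<Sum>m<n. \<Sum>j\<le>m. c' m j * Q s m j x y) + (\<Sum>j\<le>n. c' n j * Q s n j x y)" by simp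
    also have "(\<Sum>m<n. \<Sum>j\<le>m. c' m j * Q s m j x y) = (\<Sum>m<n. \<Sum>j\<le>m. c m j * Q s m j x y)"
      unfolding c'_def by (intro sum.cong) auto
    also have "(\<Sum>j\<le>n. c' n j * Q s n j x y) = (\<Sum>j\<le>n. cp (n - j) j * Q s n j x y)"
      unfolding c'_def by simp
    finally have "(\<Sum>m<Suc n. \<Sum>j\<le>m. c' m j * Q s m j x y) = g x y + (\<Sum>j\<le>n. cp (n - j) j * Q s n j x y)"
      using c by simp
    also have "\<dots> = low x y + (\<Sum>i\<le>n. cp (n - i) i * x ^ (n - i) * y ^ i)"
    proof -
      have "(\<Sum>i\<le>n. cp (n - i) i * (Q s n i x y - x ^ (n - i) * y ^ i)) =
         (\<Sum>i\<le>n. cp (n - i) i * Q s n i x y) - (\<Sum>i\<le>n. cp (n - i) i * x ^ (n - i) * y ^ i)"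
        by (simp add: right_diff_distrib sum_subtractf mult.assoc)
      thus ?thesis unfolding g_def by simp
    qed
    finally show "p x y = (\<Sum>m<Suc n. \<Sum>j\<le>m. c' m j * Q s m j x y)" using p_eq by simp
  qed
qed

lemma orth: assumes "poly_deg_lt n p" "i \<le> n" shows "IP s (Q s n i) p = 0"
proof -
  obtain c where c: "\<And>x y. p x y = (\<Sum>m<n. \<Sum>j\<le>m. c m j * Q s m j x y)" using span[OF assms(1)] by blast
  have pe: "p = (\<lambda>x y. \<Sum>m<n. \<Sum>j\<le>m. c m j * Q s m j x y)" using c by (intro ext) auto
  have "IP s (Q s n i) p = (\<Sum>m<n. IP s (Q s n i) (\<lambda>x y. \<Sum>j\<le>m. c m j * Q s m j x y))"
    unfolding pe using assms(2) by (intro ip_sum2 gr_sum gr_scale gr_Q) auto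
  also have "\<dots> = (\<Sum>m<n. \<Sum>j\<le>m. c m j * IP s (Q s n i) (Q s m j))"
    using assms(2) by (intro sum.cong refl ip_lin2 gr_Q) auto
  also have "\<dots> = 0" using assms(2) by (intro sum.neutral ballI) (auto simp: orthQ)
  finally show ?thesis .
qed


lemma energy:
  assumes i: "i \<le> N" and st: "\<bar>s - t\<bar> \<le> 1"
  shows "IP (t - 1) (\<lambda>x y. Q s N i x y - Q t N i x y) (\<lambda>x y. Q s N i x y - Q t N i x y)
     \<le> (s - t)\<^sup>2 * IP (t + 3) (\<lambda>x y. (x\<^sup>2 + y\<^sup>2) * Q t N i x y) (\<lambda>x y. (x\<^sup>2 + y\<^sup>2) * Q t N i x y)"
proof -
  define D where "D = (\<lambda>x y. Q s N i x y - Q t N i x y)"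
  define C0 where "C0 = IP (t + 3) (\<lambda>x y. (x\<^sup>2 + y\<^sup>2) * Q t N i x y) (\<lambda>x y. (x\<^sup>2 + y\<^sup>2) * Q t N i x y)"
  have pD: "poly_deg_lt N D" unfolding D_def using pdl_QD[OF i] .
  have gD: "gr D" using gr_poly[OF pD] .
  have gs: "gr (Q s N i)" and gt: "gr (Q t N i)" using gr_Q i by auto
  have "IP s D D = IP s (\<lambda>x y. Q s N i x y - Q t N i x y) D" by (simp only: D_def)
  also have "\<dots> = IP s (Q s N i) D - IP s (Q t N i) D" by (rule ip_diff1[OF gs gt gD])
  also have "IP s (Q s N i) D = 0" by (rule orth[OF pD i])
  finally have e1: "IP s D D = - IP s (Q t N i) D" by simp
  have e2: "IP t (Q t N i) D = 0" by (rule orth[OF pD i])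
  have "\<bar>IP s D (Q t N i) - IP t D (Q t N i)\<bar> \<le> IP (t - 1) D D / 2 + (s - t)\<^sup>2 / 2 * C0"
    unfolding C0_def by (rule WD[OF gD gt st])
  moreover have "IP s D (Q t N i) = IP s (Q t N i) D" "IP t D (Q t N i) = IP t (Q t N i) D" by (rule ip_sym)+
  ultimately have "IP s D D \<le> IP (t - 1) D D / 2 + (s - t)\<^sup>2 / 2 * C0"
    using e1 e2 by simp
  moreover have "IP (t - 1) D D \<le> IP s D D" using st by (intro ip_mono_weight gD) auto
  ultimately have "IP (t - 1) D D \<le> (s - t)\<^sup>2 * C0" by simp
  thus ?thesis unfolding D_def C0_def .
qed

lemma key_deriv:
  assumes i: "i \<le> N" and P: "poly_deg_lt N P"
  shows "((\<lambda>s. IP t (Q s N i) P) has_real_derivative - IP t (\<lambda>x y. (x\<^sup>2 + y\<^sup>2) * Q t N i x y) P) (at t)"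
proof (rule deriv_from_bound)
  fix s assume st: "\<bar>s - t\<bar> \<le> 1"
  define D where "D = (\<lambda>x y. Q s N i x y - Q t N i x y)"
  define C0 where "C0 = IP (t + 3) (\<lambda>x y. (x\<^sup>2 + y\<^sup>2) * Q t N i x y) (\<lambda>x y. (x\<^sup>2 + y\<^sup>2) * Q t N i x y)"
  define C2 where "C2 = IP (t + 3) (\<lambda>x y. (x\<^sup>2 + y\<^sup>2) * P x y) (\<lambda>x y. (x\<^sup>2 + y\<^sup>2) * P x y)"
  define K1 where "K1 = IP (t + 1) (\<lambda>x y. \<bar>Q t N i x y * P x y\<bar> * (x\<^sup>2 + y\<^sup>2)\<^sup>2) (\<lambda>x y. 1)"
  define L where "L = - IP t (\<lambda>x y. (x\<^sup>2 + y\<^sup>2) * Q t N i x y) P"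
  have pD: "poly_deg_lt N D" unfolding D_def using pdl_QD[OF i] .
  have gD: "gr D" using gr_poly[OF pD] .
  have gP: "gr P" using gr_poly[OF P] .
  have gs: "gr (Q s N i)" and gt: "gr (Q t N i)" using gr_Q i by auto
  have en: "IP (t - 1) D D \<le> (s - t)\<^sup>2 * C0" unfolding D_def C0_def by (rule energy[OF i st])
  have o1: "IP t (Q t N i) P = 0" by (rule orth[OF P i])
  have o2: "IP s (Q s N i) P = 0" by (rule orth[OF P i])
  have Qs: "Q s N i = (\<lambda>x y. Q t N i x y + D x y)" unfolding D_def by (intro ext) simp
  have phi_s: "IP t (Q s N i) P = IP t D P"
  proof -
    have "IP t (Q s N i) P = IP t (\<lambda>x y. Q t N i x y + D x y) P" using Qs by simp
    also have "\<dots> = IP t (Q t N i) P + IP t D P" by (rule ip_add1[OF gt gD gP])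
    finally show ?thesis using o1 by simp
  qed
  have "IP s D P = IP s (Q s N i) P - IP s (Q t N i) P" unfolding D_def by (rule ip_diff1[OF gs gt gP])
  hence sDP: "IP s D P = - IP s (Q t N i) P" using o2 by simp
  have phi_eq: "IP t (Q s N i) P - IP t (Q t N i) P - (s - t) * L
      = - (IP s (Q t N i) P - IP t (Q t N i) P - (s - t) * IP t (\<lambda>x y. (x\<^sup>2 + y\<^sup>2) * Q t N i x y) P)
        - (IP s D P - IP t D P)"
    using phi_s sDP o1 unfolding L_def by simp
  have b1: "\<bar>IP s (Q t N i) P - IP t (Q t N i) P - (s - t) * IP t (\<lambda>x y. (x\<^sup>2 + y\<^sup>2) * Q t N i x y) P\<bar>
     \<le> (s - t)\<^sup>2 * K1" unfolding K1_def by (rule DR[OF gt gP st])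
  have b2: "\<bar>IP s D P - IP t D P\<bar> \<le> IP (t - 1) D D / 2 + (s - t)\<^sup>2 / 2 * C2"
    unfolding C2_def by (rule WD[OF gD gP st])
  have "\<bar>IP t (Q s N i) P - IP t (Q t N i) P - (s - t) * L\<bar> \<le> (s - t)\<^sup>2 * K1 + ((s - t)\<^sup>2 * C0 / 2 + (s - t)\<^sup>2 / 2 * C2)"
    unfolding phi_eq using b1 b2 en by linarith
  also have "\<dots> = (K1 + C0 / 2 + C2 / 2) * (s - t)\<^sup>2" by (simp add: algebra_simps)
  finally show "\<bar>IP t (Q s N i) P - IP t (Q t N i) P - (s - t) * L\<bar> \<le> (K1 + C0 / 2 + C2 / 2) * (s - t)\<^sup>2" .
qed


lemma dimE1: "E1 s n \<in> carrier_mat (Suc n) n" using tt[of s] unfolding three_term_def by simp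
lemma dimE2: "E2 s n \<in> carrier_mat (Suc n) n" using tt[of s] unfolding three_term_def by simp

lemma tt1: "i \<le> n \<Longrightarrow> x * Q s n i x y = Q s (Suc n) i x y + (\<Sum>j<n. E1 s n $$ (i, j) * Q s (n - 1) j x y)"
  using tt[of s] unfolding three_term_def by simp
lemma tt2: "i \<le> n \<Longrightarrow> y * Q s n i x y = Q s (Suc n) (Suc i) x y + (\<Sum>j<n. E2 s n $$ (i, j) * Q s (n - 1) j x y)"
  using tt[of s] unfolding three_term_def by simp

lemma gr_lincomb: "(\<And>l. l \<in> I \<Longrightarrow> l \<le> m) \<Longrightarrow> finite I \<Longrightarrow> gr (\<lambda>x y. \<Sum>l\<in>I. c l * Q s m l x y)"
  by (intro gr_sum gr_scale gr_Q) auto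

lemma gr_xQ: "j \<le> m \<Longrightarrow> gr (\<lambda>x y. x * Q s m j x y)" by (intro gr_mult gr_x gr_Q)
lemma gr_yQ: "j \<le> m \<Longrightarrow> gr (\<lambda>x y. y * Q s m j x y)" by (intro gr_mult gr_y gr_Q)
lemma gr_rQ: "j \<le> m \<Longrightarrow> gr (\<lambda>x y. (x\<^sup>2 + y\<^sup>2) * Q s m j x y)" by (intro gr_mult gr_r2 gr_Q)

lemma B1x: assumes "a \<le> Suc N" "b \<le> N"
  shows "IP s (\<lambda>x y. x * Q s (Suc N) a x y) (Q s N b) = (\<Sum>p<Suc N. E1 s (Suc N) $$ (a, p) * IP s (Q s N p) (Q s N b))"
proof -
  have f: "(\<lambda>x y. x * Q s (Suc N) a x y) = (\<lambda>x y. Q s (Suc (Suc N)) a x y + (\<Sum>p<Suc N. E1 s (Suc N) $$ (a, p) * Q s N p x y))"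
    using tt1[OF assms(1), where s = s] by (intro ext) simp
  have "IP s (\<lambda>x y. x * Q s (Suc N) a x y) (Q s N b) = IP s (Q s (Suc (Suc N)) a) (Q s N b)
     + IP s (\<lambda>x y. \<Sum>p<Suc N. E1 s (Suc N) $$ (a, p) * Q s N p x y) (Q s N b)"
    unfolding f using assms by (intro ip_add1 gr_Q gr_lincomb) auto
  also have "IP s (Q s (Suc (Suc N)) a) (Q s N b) = 0" using assms by (intro orthQ) auto
  also have "IP s (\<lambda>x y. \<Sum>p<Suc N. E1 s (Suc N) $$ (a, p) * Q s N p x y) (Q s N b)
     = (\<Sum>p<Suc N. E1 s (Suc N) $$ (a, p) * IP s (Q s N p) (Q s N b))"
    using assms by (intro ip_lin1 gr_Q) auto
  finally show ?thesis by simp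
qed

lemma B1y: assumes "a \<le> Suc N" "b \<le> N"
  shows "IP s (\<lambda>x y. y * Q s (Suc N) a x y) (Q s N b) = (\<Sum>p<Suc N. E2 s (Suc N) $$ (a, p) * IP s (Q s N p) (Q s N b))"
proof -
  have f: "(\<lambda>x y. y * Q s (Suc N) a x y) = (\<lambda>x y. Q s (Suc (Suc N)) (Suc a) x y + (\<Sum>p<Suc N. E2 s (Suc N) $$ (a, p) * Q s N p x y))"
    using tt2[OF assms(1), where s = s] by (intro ext) simp
  have "IP s (\<lambda>x y. y * Q s (Suc N) a x y) (Q s N b) = IP s (Q s (Suc (Suc N)) (Suc a)) (Q s N b)
     + IP s (\<lambda>x y. \<Sum>p<Suc N. E2 s (Suc N) $$ (a, p) * Q s N p x y) (Q s N b)"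
    unfolding f using assms by (intro ip_add1 gr_Q gr_lincomb) auto
  also have "IP s (Q s (Suc (Suc N)) (Suc a)) (Q s N b) = 0" using assms by (intro orthQ) auto
  also have "IP s (\<lambda>x y. \<Sum>p<Suc N. E2 s (Suc N) $$ (a, p) * Q s N p x y) (Q s N b)
     = (\<Sum>p<Suc N. E2 s (Suc N) $$ (a, p) * IP s (Q s N p) (Q s N b))"
    using assms by (intro ip_lin1 gr_Q) auto
  finally show ?thesis by simp
qed

lemma B2x: assumes "l \<le> N" "b \<le> Suc N"
  shows "IP s (\<lambda>x y. x * Q s N l x y) (Q s (Suc N) b) = IP s (Q s (Suc N) l) (Q s (Suc N) b)"
proof -
  have f: "(\<lambda>x y. x * Q s N l x y) = (\<lambda>x y. Q s (Suc N) l x y + (\<Sum>j<N. E1 s N $$ (l, j) * Q s (N - 1) j x y))"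
    using tt1[OF assms(1), where s = s] by (intro ext) simp
  have "IP s (\<lambda>x y. x * Q s N l x y) (Q s (Suc N) b) = IP s (Q s (Suc N) l) (Q s (Suc N) b)
     + IP s (\<lambda>x y. \<Sum>j<N. E1 s N $$ (l, j) * Q s (N - 1) j x y) (Q s (Suc N) b)"
    unfolding f using assms by (intro ip_add1 gr_Q gr_lincomb) auto
  also have "IP s (\<lambda>x y. \<Sum>j<N. E1 s N $$ (l, j) * Q s (N - 1) j x y) (Q s (Suc N) b)
     = (\<Sum>j<N. E1 s N $$ (l, j) * IP s (Q s (N - 1) j) (Q s (Suc N) b))"
    using assms by (intro ip_lin1 gr_Q) auto
  also have "\<dots> = 0" using assms by (intro sum.neutral ballI) (auto simp: orthQ)
  finally show ?thesis by simp
qed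

lemma B2y: assumes "l \<le> N" "b \<le> Suc N"
  shows "IP s (\<lambda>x y. y * Q s N l x y) (Q s (Suc N) b) = IP s (Q s (Suc N) (Suc l)) (Q s (Suc N) b)"
proof -
  have f: "(\<lambda>x y. y * Q s N l x y) = (\<lambda>x y. Q s (Suc N) (Suc l) x y + (\<Sum>j<N. E2 s N $$ (l, j) * Q s (N - 1) j x y))"
    using tt2[OF assms(1), where s = s] by (intro ext) simp
  have "IP s (\<lambda>x y. y * Q s N l x y) (Q s (Suc N) b) = IP s (Q s (Suc N) (Suc l)) (Q s (Suc N) b)
     + IP s (\<lambda>x y. \<Sum>j<N. E2 s N $$ (l, j) * Q s (N - 1) j x y) (Q s (Suc N) b)"
    unfolding f using assms by (intro ip_add1 gr_Q gr_lincomb) auto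
  also have "IP s (\<lambda>x y. \<Sum>j<N. E2 s N $$ (l, j) * Q s (N - 1) j x y) (Q s (Suc N) b)
     = (\<Sum>j<N. E2 s N $$ (l, j) * IP s (Q s (N - 1) j) (Q s (Suc N) b))"
    using assms by (intro ip_lin1 gr_Q) auto
  also have "\<dots> = 0" using assms by (intro sum.neutral ballI) (auto simp: orthQ)
  finally show ?thesis by simp
qed

lemma F1: assumes a: "a \<le> N" and b: "b \<le> N"
  shows "IP s (\<lambda>x y. (x\<^sup>2 + y\<^sup>2) * Q s N a x y) (Q s N b)
     = (\<Sum>p<Suc N. Vmat (E1 s) (E2 s) (Suc N) $$ (a, p) * IP s (Q s N p) (Q s N b))"
proof -
  let ?H = "\<lambda>p q. IP s (Q s N p) (Q s N q)"
  have f: "(\<lambda>x y. (x\<^sup>2 + y\<^sup>2) * Q s N a x y) = (\<lambda>x y. x * (x * Q s N a x y) + y * (y * Q s N a x y))"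
    by (intro ext) (simp add: power2_eq_square algebra_simps)
  have "IP s (\<lambda>x y. (x\<^sup>2 + y\<^sup>2) * Q s N a x y) (Q s N b)
      = IP s (\<lambda>x y. x * (x * Q s N a x y)) (Q s N b) + IP s (\<lambda>x y. y * (y * Q s N a x y)) (Q s N b)"
    unfolding f using a b by (intro ip_add1 gr_mult gr_x gr_y gr_Q)
  also have "IP s (\<lambda>x y. x * (x * Q s N a x y)) (Q s N b) = IP s (\<lambda>x y. x * Q s N a x y) (\<lambda>x y. x * Q s N b x y)"
    by (rule ip_move)
  also have "IP s (\<lambda>x y. y * (y * Q s N a x y)) (Q s N b) = IP s (\<lambda>x y. y * Q s N a x y) (\<lambda>x y. y * Q s N b x y)"
    by (rule ip_move)
  also have "IP s (\<lambda>x y. x * Q s N a x y) (\<lambda>x y. x * Q s N b x y)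
      = (\<Sum>p<Suc N. E1 s (Suc N) $$ (a, p) * ?H p b) + (\<Sum>l<N. E1 s N $$ (a, l) * ?H l b)"
  proof -
    have f1: "(\<lambda>x y. x * Q s N a x y) = (\<lambda>x y. Q s (Suc N) a x y + (\<Sum>l<N. E1 s N $$ (a, l) * Q s (N - 1) l x y))"
      using tt1[OF a, where s = s] by (intro ext) simp
    have "IP s (\<lambda>x y. x * Q s N a x y) (\<lambda>x y. x * Q s N b x y)
       = IP s (Q s (Suc N) a) (\<lambda>x y. x * Q s N b x y)
         + IP s (\<lambda>x y. \<Sum>l<N. E1 s N $$ (a, l) * Q s (N - 1) l x y) (\<lambda>x y. x * Q s N b x y)"
      unfolding f1 using a b by (intro ip_add1 gr_Q gr_lincomb gr_xQ) auto
    also have "IP s (Q s (Suc N) a) (\<lambda>x y. x * Q s N b x y) = IP s (\<lambda>x y. x * Q s (Suc N) a x y) (Q s N b)"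
      by (rule ip_move[symmetric])
    also have "\<dots> = (\<Sum>p<Suc N. E1 s (Suc N) $$ (a, p) * ?H p b)" using a b by (intro B1x) auto
    also have "IP s (\<lambda>x y. \<Sum>l<N. E1 s N $$ (a, l) * Q s (N - 1) l x y) (\<lambda>x y. x * Q s N b x y)
       = (\<Sum>l<N. E1 s N $$ (a, l) * IP s (Q s (N - 1) l) (\<lambda>x y. x * Q s N b x y))"
      using b by (intro ip_lin1 gr_Q gr_xQ) auto
    also have "\<dots> = (\<Sum>l<N. E1 s N $$ (a, l) * ?H l b)"
    proof (intro sum.cong refl)
      fix l assume l: "l \<in> {..<N}"
      hence N: "N = Suc (N - 1)" by auto
      have "IP s (Q s (N - 1) l) (\<lambda>x y. x * Q s N b x y) = IP s (\<lambda>x y. x * Q s (N - 1) l x y) (Q s N b)"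
        by (rule ip_move[symmetric])
      also have "\<dots> = ?H l b" using B2x[of l "N - 1" b s] l b N by simp
      finally show "E1 s N $$ (a, l) * IP s (Q s (N - 1) l) (\<lambda>x y. x * Q s N b x y) = E1 s N $$ (a, l) * ?H l b" by simp
    qed
    finally show ?thesis .
  qed
  also have "IP s (\<lambda>x y. y * Q s N a x y) (\<lambda>x y. y * Q s N b x y)
      = (\<Sum>p<Suc N. E2 s (Suc N) $$ (Suc a, p) * ?H p b) + (\<Sum>l<N. E2 s N $$ (a, l) * ?H (Suc l) b)"
  proof -
    have f1: "(\<lambda>x y. y * Q s N a x y) = (\<lambda>x y. Q s (Suc N) (Suc a) x y + (\<Sum>l<N. E2 s N $$ (a, l) * Q s (N - 1) l x y))"
      using tt2[OF a, where s = s] by (intro ext) simp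
    have "IP s (\<lambda>x y. y * Q s N a x y) (\<lambda>x y. y * Q s N b x y)
       = IP s (Q s (Suc N) (Suc a)) (\<lambda>x y. y * Q s N b x y)
         + IP s (\<lambda>x y. \<Sum>l<N. E2 s N $$ (a, l) * Q s (N - 1) l x y) (\<lambda>x y. y * Q s N b x y)"
      unfolding f1 using a b by (intro ip_add1 gr_Q gr_lincomb gr_yQ) auto
    also have "IP s (Q s (Suc N) (Suc a)) (\<lambda>x y. y * Q s N b x y) = IP s (\<lambda>x y. y * Q s (Suc N) (Suc a) x y) (Q s N b)"
      by (rule ip_move[symmetric])
    also have "\<dots> = (\<Sum>p<Suc N. E2 s (Suc N) $$ (Suc a, p) * ?H p b)" using a b by (intro B1y) auto
    also have "IP s (\<lambda>x y. \<Sum>l<N. E2 s N $$ (a, l) * Q s (N - 1) l x y) (\<lambda>x y. y * Q s N b x y)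
       = (\<Sum>l<N. E2 s N $$ (a, l) * IP s (Q s (N - 1) l) (\<lambda>x y. y * Q s N b x y))"
      using b by (intro ip_lin1 gr_Q gr_yQ) auto
    also have "\<dots> = (\<Sum>l<N. E2 s N $$ (a, l) * ?H (Suc l) b)"
    proof (intro sum.cong refl)
      fix l assume l: "l \<in> {..<N}"
      hence N: "N = Suc (N - 1)" by auto
      have "IP s (Q s (N - 1) l) (\<lambda>x y. y * Q s N b x y) = IP s (\<lambda>x y. y * Q s (N - 1) l x y) (Q s N b)"
        by (rule ip_move[symmetric])
      also have "\<dots> = ?H (Suc l) b" using B2y[of l "N - 1" b s] l b N by simp
      finally show "E2 s N $$ (a, l) * IP s (Q s (N - 1) l) (\<lambda>x y. y * Q s N b x y) = E2 s N $$ (a, l) * ?H (Suc l) b" by simp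
    qed
    finally show ?thesis .
  qed
  also have "(\<Sum>p<Suc N. E1 s (Suc N) $$ (a, p) * ?H p b) + (\<Sum>l<N. E1 s N $$ (a, l) * ?H l b)
      + ((\<Sum>p<Suc N. E2 s (Suc N) $$ (Suc a, p) * ?H p b) + (\<Sum>l<N. E2 s N $$ (a, l) * ?H (Suc l) b))
      = (\<Sum>p<Suc N. Vmat (E1 s) (E2 s) (Suc N) $$ (a, p) * ?H p b)"
  proof -
    have v: "\<And>p. p < Suc N \<Longrightarrow> Vmat (E1 s) (E2 s) (Suc N) $$ (a, p) = E1 s (Suc N) $$ (a, p) + E2 s (Suc N) $$ (Suc a, p)
     + (if p < N then E1 s N $$ (a, p) else 0) + (if 0 < p then E2 s N $$ (a, p - 1) else 0)"
      using a by (intro Vmat_entry dimE1 dimE2) auto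
    have "(\<Sum>p<Suc N. Vmat (E1 s) (E2 s) (Suc N) $$ (a, p) * ?H p b)
      = (\<Sum>p<Suc N. E1 s (Suc N) $$ (a, p) * ?H p b) + (\<Sum>p<Suc N. E2 s (Suc N) $$ (Suc a, p) * ?H p b)
        + (\<Sum>p<Suc N. (if p < N then E1 s N $$ (a, p) else 0) * ?H p b)
        + (\<Sum>p<Suc N. (if 0 < p then E2 s N $$ (a, p - 1) else 0) * ?H p b)"
    proof -
      have "(\<Sum>p<Suc N. Vmat (E1 s) (E2 s) (Suc N) $$ (a, p) * ?H p b)
        = (\<Sum>p<Suc N. E1 s (Suc N) $$ (a, p) * ?H p b + E2 s (Suc N) $$ (Suc a, p) * ?H p b
            + (if p < N then E1 s N $$ (a, p) else 0) * ?H p b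
            + (if 0 < p then E2 s N $$ (a, p - 1) else 0) * ?H p b)"
        by (intro sum.cong refl) (simp add: v distrib_right)
      thus ?thesis by (simp only: sum.distrib)
    qed
    also have "(\<Sum>p<Suc N. (if p < N then E1 s N $$ (a, p) else 0) * ?H p b) = (\<Sum>l<N. E1 s N $$ (a, l) * ?H l b)"
      by simp
    also have "(\<Sum>p<Suc N. (if 0 < p then E2 s N $$ (a, p - 1) else 0) * ?H p b) = (\<Sum>l<N. E2 s N $$ (a, l) * ?H (Suc l) b)"
      by (subst sum.lessThan_Suc_shift) simp
    finally show ?thesis by simp
  qed
  finally show ?thesis .
qed

lemma F2: assumes c: "c \<le> Suc m" and j: "j \<le> m"
  shows "(\<Sum>l<Suc m. (E1 s (Suc m) + E2 s (Suc m)) $$ (c, l) * IP s (Q s m l) (Q s m j))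
     = IP s (Q s (Suc m) c) (Q s (Suc m) j) + IP s (Q s (Suc m) c) (Q s (Suc m) (Suc j))"
proof -
  have "(\<Sum>l<Suc m. (E1 s (Suc m) + E2 s (Suc m)) $$ (c, l) * IP s (Q s m l) (Q s m j))
      = (\<Sum>l<Suc m. E1 s (Suc m) $$ (c, l) * IP s (Q s m l) (Q s m j))
        + (\<Sum>l<Suc m. E2 s (Suc m) $$ (c, l) * IP s (Q s m l) (Q s m j))"
    using c dimE1[of s "Suc m"] dimE2[of s "Suc m"] by (simp add: sum.distrib[symmetric] distrib_right)
  also have "(\<Sum>l<Suc m. E1 s (Suc m) $$ (c, l) * IP s (Q s m l) (Q s m j)) = IP s (\<lambda>x y. x * Q s (Suc m) c x y) (Q s m j)"
    using c j by (intro B1x[symmetric])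
  also have "\<dots> = IP s (\<lambda>x y. x * Q s m j x y) (Q s (Suc m) c)"
    using ip_move[of s "\<lambda>x y. x" "Q s (Suc m) c" "Q s m j"] ip_sym[of s "Q s (Suc m) c" "\<lambda>x y. x * Q s m j x y"] by simp
  also have "\<dots> = IP s (Q s (Suc m) j) (Q s (Suc m) c)" using c j by (intro B2x)
  also have "(\<Sum>l<Suc m. E2 s (Suc m) $$ (c, l) * IP s (Q s m l) (Q s m j)) = IP s (\<lambda>x y. y * Q s (Suc m) c x y) (Q s m j)"
    using c j by (intro B1y[symmetric])
  also have "\<dots> = IP s (\<lambda>x y. y * Q s m j x y) (Q s (Suc m) c)"
    using ip_move[of s "\<lambda>x y. y" "Q s (Suc m) c" "Q s m j"] ip_sym[of s "Q s (Suc m) c" "\<lambda>x y. y * Q s m j x y"] by simp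
  also have "\<dots> = IP s (Q s (Suc m) (Suc j)) (Q s (Suc m) c)" using c j by (intro B2y)
  finally show ?thesis by (simp add: ip_sym[of s "Q s (Suc m) c"])
qed


lemma crossH: assumes "l \<le> N" "j \<le> N"
  shows "IP t (Q s N l) (Q t N j) = IP t (Q t N l) (Q t N j)"
proof -
  define D where "D = (\<lambda>x y. Q s N l x y - Q t N l x y)"
  have pD: "poly_deg_lt N D" unfolding D_def using pdl_QD[OF assms(1)] .
  have e: "Q s N l = (\<lambda>x y. Q t N l x y + D x y)" unfolding D_def by (intro ext) simp
  have "IP t (Q s N l) (Q t N j) = IP t (Q t N l) (Q t N j) + IP t D (Q t N j)"
    unfolding e using assms by (intro ip_add1 gr_Q gr_poly[OF pD])
  also have "IP t D (Q t N j) = IP t (Q t N j) D" by (rule ip_sym)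
  also have "\<dots> = 0" by (rule orth[OF pD assms(2)])
  finally show ?thesis by simp
qed


lemma mult_entry: "A \<in> carrier_mat r c \<Longrightarrow> B \<in> carrier_mat c d \<Longrightarrow> i < r \<Longrightarrow> l < d \<Longrightarrow>
   (A * B) $$ (i, l) = (\<Sum>k<c. A $$ (i, k) * B $$ (k, l))"
  by (simp add: scalar_prod_def lessThan_atLeast0)

lemma xy_Q: "i \<le> n \<Longrightarrow> (x + y) * Q s n i x y = Q s (Suc n) i x y + Q s (Suc n) (Suc i) x y
   + (\<Sum>l<n. (E1 s n + E2 s n) $$ (i, l) * Q s (n - 1) l x y)"
proof -
  assume i: "i \<le> n"
  have "(\<Sum>l<n. (E1 s n + E2 s n) $$ (i, l) * Q s (n - 1) l x y)
      = (\<Sum>l<n. E1 s n $$ (i, l) * Q s (n - 1) l x y) + (\<Sum>l<n. E2 s n $$ (i, l) * Q s (n - 1) l x y)"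
  proof -
    have "(\<Sum>l<n. (E1 s n + E2 s n) $$ (i, l) * Q s (n - 1) l x y)
      = (\<Sum>l<n. E1 s n $$ (i, l) * Q s (n - 1) l x y + E2 s n $$ (i, l) * Q s (n - 1) l x y)"
    proof (intro sum.cong refl)
      fix l assume "l \<in> {..<n}"
      hence "(E1 s n + E2 s n) $$ (i, l) = E1 s n $$ (i, l) + E2 s n $$ (i, l)"
        using i dimE1[of s n] dimE2[of s n] by simp
      thus "(E1 s n + E2 s n) $$ (i, l) * Q s (n - 1) l x y = E1 s n $$ (i, l) * Q s (n - 1) l x y + E2 s n $$ (i, l) * Q s (n - 1) l x y"
        by (simp add: distrib_right)
    qed
    thus ?thesis by (simp only: sum.distrib)
  qed
  thus ?thesis using tt1[OF i, where s = s and x = x and y = y] tt2[OF i, where s = s and x = x and y = y]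
    by (simp add: distrib_right)
qed


definition Rf :: "real \<Rightarrow> nat \<Rightarrow> real \<Rightarrow> nat \<Rightarrow> nat \<Rightarrow> real" where
  "Rf t m s i j = IP t (\<lambda>x y. (x + y) * Q s (Suc m) i x y - Q s (Suc (Suc m)) i x y - Q s (Suc (Suc m)) (Suc i) x y) (Q t m j)"

lemma R1: assumes i: "i \<le> Suc m" and j: "j \<le> m"
  shows "Rf t m s i j = (\<Sum>l<Suc m. (E1 s (Suc m) + E2 s (Suc m)) $$ (i, l) * IP t (Q t m l) (Q t m j))"
proof -
  have f: "(\<lambda>x y. (x + y) * Q s (Suc m) i x y - Q s (Suc (Suc m)) i x y - Q s (Suc (Suc m)) (Suc i) x y)
     = (\<lambda>x y. \<Sum>l<Suc m. (E1 s (Suc m) + E2 s (Suc m)) $$ (i, l) * Q s m l x y)"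
    using xy_Q[OF i, where s = s] by (intro ext) simp
  have "Rf t m s i j = (\<Sum>l<Suc m. (E1 s (Suc m) + E2 s (Suc m)) $$ (i, l) * IP t (Q s m l) (Q t m j))"
    unfolding Rf_def f using j by (intro ip_lin1 gr_Q) auto
  also have "\<dots> = (\<Sum>l<Suc m. (E1 s (Suc m) + E2 s (Suc m)) $$ (i, l) * IP t (Q t m l) (Q t m j))"
    using j by (intro sum.cong refl arg_cong[where f = "\<lambda>z. _ * z"] crossH) auto
  finally show ?thesis .
qed

definition Pj :: "real \<Rightarrow> nat \<Rightarrow> nat \<Rightarrow> real \<Rightarrow> real \<Rightarrow> real" where
  "Pj t m j = (\<lambda>x y. \<Sum>l<m. (E1 t m + E2 t m) $$ (j, l) * Q t (m - 1) l x y)"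

definition Rd :: "real \<Rightarrow> nat \<Rightarrow> nat \<Rightarrow> nat \<Rightarrow> real" where
  "Rd t m i j = - IP t (\<lambda>x y. (x\<^sup>2 + y\<^sup>2) * Q t (Suc m) i x y) (Pj t m j)
     + IP t (\<lambda>x y. (x\<^sup>2 + y\<^sup>2) * Q t (Suc (Suc m)) i x y) (Q t m j)
     + IP t (\<lambda>x y. (x\<^sup>2 + y\<^sup>2) * Q t (Suc (Suc m)) (Suc i) x y) (Q t m j)"

lemma pdl_Pj: "poly_deg_lt (Suc m) (Pj t m j)"
  unfolding Pj_def
proof (intro pdl_sum pdl_scale)
  fix l assume l: "l \<in> {..<m}"
  hence "Suc (m - 1) \<le> Suc m" "l \<le> m - 1" by auto
  thus "poly_deg_lt (Suc m) (Q t (m - 1) l)" using pdl_mono[OF pdl_Q] by blast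
qed simp

lemma gr_Pj: "gr (Pj t m j)" using gr_poly[OF pdl_Pj] .

lemma Pj_eq: "j \<le> m \<Longrightarrow> Pj t m j x y = (x + y) * Q t m j x y - Q t (Suc m) j x y - Q t (Suc m) (Suc j) x y"
proof -
  assume j: "j \<le> m"
  have "(x + y) * Q t m j x y = Q t (Suc m) j x y + Q t (Suc m) (Suc j) x y
   + (\<Sum>l<m. (E1 t m + E2 t m) $$ (j, l) * Q t (m - 1) l x y)" by (rule xy_Q[OF j])
  thus ?thesis unfolding Pj_def by linarith
qed


abbreviation M :: "real \<Rightarrow> nat \<Rightarrow> nat \<Rightarrow> nat \<Rightarrow> real" where
  "M t N a b \<equiv> IP t (\<lambda>x y. (x\<^sup>2 + y\<^sup>2) * Q t N a x y) (Q t N b)"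




lemma R2: assumes i: "i \<le> Suc m" and j: "j \<le> m"
  shows "((\<lambda>s. Rf t m s i j) has_real_derivative Rd t m i j) (at t)"
proof -
  let ?n = "Suc m"
  have pm: "poly_deg_lt (Suc ?n) (Q t m j)" using pdl_mono[OF pdl_Q[OF j]] by simp
  have xyQ: "(\<lambda>x y. (x + y) * Q t m j x y) = (\<lambda>x y. Q t ?n j x y + Q t ?n (Suc j) x y + Pj t m j x y)"
    using Pj_eq[OF j] by (intro ext) simp
  have eq: "Rf t m s i j = (IP t (Q t ?n i) (Q t ?n j) + IP t (Q t ?n i) (Q t ?n (Suc j)))
      + IP t (Q s ?n i) (Pj t m j) - IP t (Q s (Suc ?n) i) (Q t m j) - IP t (Q s (Suc ?n) (Suc i)) (Q t m j)" for s
  proof -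
    have "Rf t m s i j = IP t (\<lambda>x y. (x + y) * Q s ?n i x y - Q s (Suc ?n) i x y) (Q t m j) - IP t (Q s (Suc ?n) (Suc i)) (Q t m j)"
      unfolding Rf_def using i j by (intro ip_diff1 gr_diff gr_mult gr_add gr_x gr_y gr_Q) auto
    also have "IP t (\<lambda>x y. (x + y) * Q s ?n i x y - Q s (Suc ?n) i x y) (Q t m j)
       = IP t (\<lambda>x y. (x + y) * Q s ?n i x y) (Q t m j) - IP t (Q s (Suc ?n) i) (Q t m j)"
      using i j by (intro ip_diff1 gr_mult gr_add gr_x gr_y gr_Q) auto
    also have "IP t (\<lambda>x y. (x + y) * Q s ?n i x y) (Q t m j) = IP t (Q s ?n i) (\<lambda>x y. (x + y) * Q t m j x y)"
      by (rule ip_move)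
    also have "\<dots> = IP t (Q s ?n i) (\<lambda>x y. Q t ?n j x y + Q t ?n (Suc j) x y) + IP t (Q s ?n i) (Pj t m j)"
      unfolding xyQ using i j by (intro ip_add2 gr_add gr_Q gr_Pj) auto
    also have "IP t (Q s ?n i) (\<lambda>x y. Q t ?n j x y + Q t ?n (Suc j) x y) = IP t (Q s ?n i) (Q t ?n j) + IP t (Q s ?n i) (Q t ?n (Suc j))"
      using i j by (intro ip_add2 gr_Q) auto
    also have "IP t (Q s ?n i) (Q t ?n j) = IP t (Q t ?n i) (Q t ?n j)" using i j by (intro crossH) auto
    also have "IP t (Q s ?n i) (Q t ?n (Suc j)) = IP t (Q t ?n i) (Q t ?n (Suc j))" using i j by (intro crossH) auto
    finally show ?thesis .
  qed
  have d1: "((\<lambda>s. IP t (Q s ?n i) (Pj t m j)) has_real_derivative - IP t (\<lambda>x y. (x\<^sup>2 + y\<^sup>2) * Q t ?n i x y) (Pj t m j)) (at t)"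
    by (rule key_deriv[OF i pdl_Pj])
  have d2: "((\<lambda>s. IP t (Q s (Suc ?n) i) (Q t m j)) has_real_derivative - IP t (\<lambda>x y. (x\<^sup>2 + y\<^sup>2) * Q t (Suc ?n) i x y) (Q t m j)) (at t)"
    using i by (intro key_deriv pm) auto
  have d3: "((\<lambda>s. IP t (Q s (Suc ?n) (Suc i)) (Q t m j)) has_real_derivative - IP t (\<lambda>x y. (x\<^sup>2 + y\<^sup>2) * Q t (Suc ?n) (Suc i) x y) (Q t m j)) (at t)"
    using i by (intro key_deriv pm) auto
  have "((\<lambda>s. (IP t (Q t ?n i) (Q t ?n j) + IP t (Q t ?n i) (Q t ?n (Suc j)))
      + IP t (Q s ?n i) (Pj t m j) - IP t (Q s (Suc ?n) i) (Q t m j) - IP t (Q s (Suc ?n) (Suc i)) (Q t m j))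
     has_real_derivative 0 + - IP t (\<lambda>x y. (x\<^sup>2 + y\<^sup>2) * Q t ?n i x y) (Pj t m j)
       - - IP t (\<lambda>x y. (x\<^sup>2 + y\<^sup>2) * Q t (Suc ?n) i x y) (Q t m j)
       - - IP t (\<lambda>x y. (x\<^sup>2 + y\<^sup>2) * Q t (Suc ?n) (Suc i) x y) (Q t m j)) (at t)"
    by (intro DERIV_diff DERIV_add DERIV_const d1 d2 d3)
  thus ?thesis unfolding eq Rd_def by simp
qed



lemma R3: assumes i: "i \<le> Suc m" and j: "j \<le> m"
  shows "Rd t m i j = M t (Suc m) i j + M t (Suc m) i (Suc j)
     - (\<Sum>l<Suc m. (E1 t (Suc m) + E2 t (Suc m)) $$ (i, l) * M t m l j)"
proof -
  let ?n = "Suc m"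
  let ?r = "\<lambda>x y. (x\<^sup>2 + y\<^sup>2) * Q t ?n i x y"
  have gr: "gr ?r" using i by (intro gr_rQ)
  have pe: "Pj t m j = (\<lambda>x y. (x + y) * Q t m j x y - Q t ?n j x y - Q t ?n (Suc j) x y)"
    using Pj_eq[OF j] by (intro ext) simp
  have a: "IP t ?r (Pj t m j) = IP t ?r (\<lambda>x y. (x + y) * Q t m j x y) - M t ?n i j - M t ?n i (Suc j)"
  proof -
    have "IP t ?r (Pj t m j) = IP t ?r (\<lambda>x y. (x + y) * Q t m j x y - Q t ?n j x y) - IP t ?r (Q t ?n (Suc j))"
      unfolding pe using j by (intro ip_diff2 gr gr_diff gr_mult gr_add gr_x gr_y gr_Q) auto
    also have "IP t ?r (\<lambda>x y. (x + y) * Q t m j x y - Q t ?n j x y) = IP t ?r (\<lambda>x y. (x + y) * Q t m j x y) - IP t ?r (Q t ?n j)"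
      using j by (intro ip_diff2 gr gr_mult gr_add gr_x gr_y gr_Q) auto
    finally show ?thesis by simp
  qed
  have b: "IP t ?r (\<lambda>x y. (x + y) * Q t m j x y) = IP t (\<lambda>x y. (x\<^sup>2 + y\<^sup>2) * Q t (Suc ?n) i x y) (Q t m j) + IP t (\<lambda>x y. (x\<^sup>2 + y\<^sup>2) * Q t (Suc ?n) (Suc i) x y) (Q t m j)
      + (\<Sum>l<?n. (E1 t ?n + E2 t ?n) $$ (i, l) * M t m l j)"
  proof -
    have "IP t ?r (\<lambda>x y. (x + y) * Q t m j x y) = IP t (\<lambda>x y. (x + y) * ?r x y) (Q t m j)"
      by (rule ip_move[symmetric])
    also have "(\<lambda>x y. (x + y) * ?r x y) = (\<lambda>x y. ((x\<^sup>2 + y\<^sup>2) * Q t (Suc ?n) i x y + (x\<^sup>2 + y\<^sup>2) * Q t (Suc ?n) (Suc i) x y)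
        + (\<Sum>l<?n. (E1 t ?n + E2 t ?n) $$ (i, l) * ((x\<^sup>2 + y\<^sup>2) * Q t m l x y)))"
    proof (intro ext)
      fix x y
      have "(x + y) * ?r x y = (x\<^sup>2 + y\<^sup>2) * ((x + y) * Q t ?n i x y)" by (simp add: algebra_simps)
      also have "\<dots> = (x\<^sup>2 + y\<^sup>2) * (Q t (Suc ?n) i x y + Q t (Suc ?n) (Suc i) x y
          + (\<Sum>l<?n. (E1 t ?n + E2 t ?n) $$ (i, l) * Q t m l x y))"
        using xy_Q[OF i, where s = t and x = x and y = y] by simp
      finally show "(x + y) * ?r x y = ((x\<^sup>2 + y\<^sup>2) * Q t (Suc ?n) i x y + (x\<^sup>2 + y\<^sup>2) * Q t (Suc ?n) (Suc i) x y)
        + (\<Sum>l<?n. (E1 t ?n + E2 t ?n) $$ (i, l) * ((x\<^sup>2 + y\<^sup>2) * Q t m l x y))"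
        by (simp add: distrib_left sum_distrib_left mult.left_commute)
    qed
    also have "IP t (\<lambda>x y. ((x\<^sup>2 + y\<^sup>2) * Q t (Suc ?n) i x y + (x\<^sup>2 + y\<^sup>2) * Q t (Suc ?n) (Suc i) x y)
        + (\<Sum>l<?n. (E1 t ?n + E2 t ?n) $$ (i, l) * ((x\<^sup>2 + y\<^sup>2) * Q t m l x y))) (Q t m j)
      = IP t (\<lambda>x y. (x\<^sup>2 + y\<^sup>2) * Q t (Suc ?n) i x y + (x\<^sup>2 + y\<^sup>2) * Q t (Suc ?n) (Suc i) x y) (Q t m j)
        + IP t (\<lambda>x y. \<Sum>l<?n. (E1 t ?n + E2 t ?n) $$ (i, l) * ((x\<^sup>2 + y\<^sup>2) * Q t m l x y)) (Q t m j)"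
      using i j by (intro ip_add1 gr_add gr_rQ gr_sum gr_scale gr_Q) auto
    also have "IP t (\<lambda>x y. (x\<^sup>2 + y\<^sup>2) * Q t (Suc ?n) i x y + (x\<^sup>2 + y\<^sup>2) * Q t (Suc ?n) (Suc i) x y) (Q t m j)
       = IP t (\<lambda>x y. (x\<^sup>2 + y\<^sup>2) * Q t (Suc ?n) i x y) (Q t m j) + IP t (\<lambda>x y. (x\<^sup>2 + y\<^sup>2) * Q t (Suc ?n) (Suc i) x y) (Q t m j)"
      using i j by (intro ip_add1 gr_rQ gr_Q) auto
    also have "IP t (\<lambda>x y. \<Sum>l<?n. (E1 t ?n + E2 t ?n) $$ (i, l) * ((x\<^sup>2 + y\<^sup>2) * Q t m l x y)) (Q t m j)
       = (\<Sum>l<?n. (E1 t ?n + E2 t ?n) $$ (i, l) * M t m l j)"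
      using j by (intro ip_lin1 gr_rQ gr_Q) auto
    finally show ?thesis .
  qed
  show ?thesis unfolding Rd_def a b by simp
qed



lemma swap_lemma: "(\<Sum>l\<in>L. (\<Sum>p\<in>P. (a p :: real) * e p l) * h l) = (\<Sum>p\<in>P. a p * (\<Sum>l\<in>L. e p l * h l))"
proof -
  have "(\<Sum>l\<in>L. (\<Sum>p\<in>P. a p * e p l) * h l) = (\<Sum>l\<in>L. \<Sum>p\<in>P. a p * (e p l * h l))"
    by (simp add: sum_distrib_right mult.assoc)
  also have "\<dots> = (\<Sum>p\<in>P. \<Sum>l\<in>L. a p * (e p l * h l))" by (rule sum.swap)
  also have "\<dots> = (\<Sum>p\<in>P. a p * (\<Sum>l\<in>L. e p l * h l))" by (simp add: sum_distrib_left)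
  finally show ?thesis .
qed

lemma R4: assumes i: "i \<le> Suc m" and j: "j \<le> m"
  shows "(\<Sum>l<Suc m. (Vmat (E1 t) (E2 t) (Suc (Suc m)) * (E1 t (Suc m) + E2 t (Suc m))
      - (E1 t (Suc m) + E2 t (Suc m)) * Vmat (E1 t) (E2 t) (Suc m)) $$ (i, l) * IP t (Q t m l) (Q t m j))
    = M t (Suc m) i j + M t (Suc m) i (Suc j)
     - (\<Sum>l<Suc m. (E1 t (Suc m) + E2 t (Suc m)) $$ (i, l) * M t m l j)"
proof -
  let ?n = "Suc m"
  let ?E = "E1 t ?n + E2 t ?n"
  let ?V' = "Vmat (E1 t) (E2 t) (Suc ?n)" and ?V = "Vmat (E1 t) (E2 t) ?n"
  let ?H = "\<lambda>a b. IP t (Q t m a) (Q t m b)" and ?Hn = "\<lambda>a b. IP t (Q t ?n a) (Q t ?n b)"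
  have cE: "?E \<in> carrier_mat (Suc ?n) ?n" using dimE1[of t ?n] dimE2[of t ?n] by auto
  have cV': "?V' \<in> carrier_mat (Suc ?n) (Suc ?n)" by (intro Vmat_carrier dimE1 dimE2)
  have cV: "?V \<in> carrier_mat ?n ?n" by (intro Vmat_carrier dimE1 dimE2)
  have T: "(?V' * ?E - ?E * ?V) $$ (i, l) = (\<Sum>p<Suc ?n. ?V' $$ (i, p) * ?E $$ (p, l)) - (\<Sum>q<?n. ?E $$ (i, q) * ?V $$ (q, l))"
    if l: "l < ?n" for l
  proof -
    have "(?V' * ?E - ?E * ?V) $$ (i, l) = (?V' * ?E) $$ (i, l) - (?E * ?V) $$ (i, l)"
      using cE cV cV' i l dimE2[of t ?n] by (intro index_minus_mat(1)) (auto dest!: carrier_matD)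
    thus ?thesis using mult_entry[OF cV' cE, of i l] mult_entry[OF cE cV, of i l] i l by simp
  qed
  have "(\<Sum>l<?n. (?V' * ?E - ?E * ?V) $$ (i, l) * ?H l j)
     = (\<Sum>l<?n. ((\<Sum>p<Suc ?n. ?V' $$ (i, p) * ?E $$ (p, l)) - (\<Sum>q<?n. ?E $$ (i, q) * ?V $$ (q, l))) * ?H l j)"
    by (intro sum.cong refl) (simp add: T)
  also have "\<dots> = (\<Sum>l<?n. (\<Sum>p<Suc ?n. ?V' $$ (i, p) * ?E $$ (p, l)) * ?H l j)
      - (\<Sum>l<?n. (\<Sum>q<?n. ?E $$ (i, q) * ?V $$ (q, l)) * ?H l j)"
    by (simp only: left_diff_distrib sum_subtractf)
  also have "\<dots> = (\<Sum>p<Suc ?n. ?V' $$ (i, p) * (\<Sum>l<?n. ?E $$ (p, l) * ?H l j))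
      - (\<Sum>q<?n. ?E $$ (i, q) * (\<Sum>l<?n. ?V $$ (q, l) * ?H l j))"
    by (simp only: swap_lemma)
  also have "(\<Sum>p<Suc ?n. ?V' $$ (i, p) * (\<Sum>l<?n. ?E $$ (p, l) * ?H l j))
      = (\<Sum>p<Suc ?n. ?V' $$ (i, p) * (?Hn p j + ?Hn p (Suc j)))"
  proof (intro sum.cong refl)
    fix p assume "p \<in> {..<Suc ?n}"
    hence p: "p \<le> Suc m" by auto
    show "?V' $$ (i, p) * (\<Sum>l<?n. ?E $$ (p, l) * ?H l j) = ?V' $$ (i, p) * (?Hn p j + ?Hn p (Suc j))"
      using F2[OF p j, where s = t] by simp
  qed
  also have "\<dots> = (\<Sum>p<Suc ?n. ?V' $$ (i, p) * ?Hn p j) + (\<Sum>p<Suc ?n. ?V' $$ (i, p) * ?Hn p (Suc j))"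
    by (simp only: distrib_left sum.distrib)
  also have "(\<Sum>p<Suc ?n. ?V' $$ (i, p) * ?Hn p j) = M t ?n i j" using i j by (intro F1[symmetric]) auto
  also have "(\<Sum>p<Suc ?n. ?V' $$ (i, p) * ?Hn p (Suc j)) = M t ?n i (Suc j)" using i j by (intro F1[symmetric]) auto
  also have "(\<Sum>q<?n. ?E $$ (i, q) * (\<Sum>l<?n. ?V $$ (q, l) * ?H l j)) = (\<Sum>q<?n. ?E $$ (i, q) * M t m q j)"
  proof (intro sum.cong refl)
    fix q assume "q \<in> {..<?n}"
    hence q: "q \<le> m" by auto
    show "?E $$ (i, q) * (\<Sum>l<?n. ?V $$ (q, l) * ?H l j) = ?E $$ (i, q) * M t m q j"
      using F1[OF q j, where s = t] by simp
  qed
  finally show ?thesis .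
qed


end


theorem theorem6p2:
  fixes a40 a22 a04 :: real
    and Q :: "real \<Rightarrow> nat \<Rightarrow> nat \<Rightarrow> real \<Rightarrow> real \<Rightarrow> real"
    and E1 E2 :: "real \<Rightarrow> nat \<Rightarrow> real mat"
    and t :: real and n i j :: nat
  assumes "a40 \<ge> 0" "a22 \<ge> 0" "a04 \<ge> 0"
    and "a40 + a22 > 0" "a22 + a04 > 0"
    and "\<And>s. monic_OPS a40 a22 a04 s (Q s)"
    and "\<And>s. three_term (Q s) (E1 s) (E2 s)"
    and "n \<ge> 1" "i \<le> n" "j < n"
  shows "((\<lambda>s. (E1 s n + E2 s n) $$ (i, j)) has_real_derivative
           (Vmat (E1 t) (E2 t) (n + 1) * (E1 t n + E2 t n)
              - (E1 t n + E2 t n) * Vmat (E1 t) (E2 t) n) $$ (i, j)) (at t)"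
proof -
  interpret ops_ctx a40 a22 a04 Q E1 E2 using assms(6,7) by unfold_locales
  obtain m where n: "n = Suc m" using assms(8) by (cases n) auto
  have i: "i \<le> Suc m" and j: "j \<le> m" using assms(9,10) n by auto
  define H where "H = (\<lambda>a b. IP t (Q t m a) (Q t m b))"
  have pd: "(\<Sum>a<Suc m. \<Sum>b<Suc m. v a * v b * H a b) > 0" if "\<exists>a<Suc m. v a \<noteq> 0" for v
  proof -
    have "\<exists>a\<le>m. v a \<noteq> 0" using that less_Suc_eq_le by blast
    hence "(\<Sum>a\<le>m. \<Sum>b\<le>m. v a * v b * IP t (Q t m a) (Q t m b)) > 0" by (rule posdef)
    thus ?thesis unfolding H_def by (simp add: lessThan_Suc_atMost)
  qed
  obtain B where HB: "\<And>a b. a < Suc m \<Longrightarrow> b < Suc m \<Longrightarrow> (\<Sum>l<Suc m. H a l * B l b) = (if a = b then 1 else 0)"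
    using right_inverse_exists[of "Suc m" H, OF pd] by blast
  have contract: "(\<Sum>k<Suc m. (\<Sum>l<Suc m. f l * H l k) * B k j) = f j" for f :: "nat \<Rightarrow> real"
  proof -
    have "(\<Sum>k<Suc m. (\<Sum>l<Suc m. f l * H l k) * B k j) = (\<Sum>l<Suc m. f l * (\<Sum>k<Suc m. H l k * B k j))"
      by (rule swap_lemma)
    also have "\<dots> = (\<Sum>l<Suc m. f l * (if l = j then 1 else 0))"
    proof (intro sum.cong refl)
      fix l assume "l \<in> {..<Suc m}"
      hence "(\<Sum>k<Suc m. H l k * B k j) = (if l = j then 1 else 0)" using j by (intro HB) auto
      thus "f l * (\<Sum>k<Suc m. H l k * B k j) = f l * (if l = j then 1 else 0)" by simp
    qed
    also have "\<dots> = f j" using j by (simp add: sum_delta_right[of f j "{..<Suc m}", simplified] eq_commute[of _ j] cong: if_cong)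
    finally show ?thesis .
  qed
  have Eeq: "(E1 s n + E2 s n) $$ (i, j) = (\<Sum>k<Suc m. Rf t m s i k * B k j)" for s
  proof -
    have "(\<Sum>k<Suc m. Rf t m s i k * B k j)
       = (\<Sum>k<Suc m. (\<Sum>l<Suc m. (E1 s (Suc m) + E2 s (Suc m)) $$ (i, l) * H l k) * B k j)"
      using i unfolding H_def by (intro sum.cong refl) (simp add: R1)
    also have "\<dots> = (E1 s (Suc m) + E2 s (Suc m)) $$ (i, j)" by (rule contract)
    finally show ?thesis using n by simp
  qed
  have deriv: "((\<lambda>s. \<Sum>k<Suc m. Rf t m s i k * B k j) has_real_derivative (\<Sum>k<Suc m. Rd t m i k * B k j)) (at t)"
    using i by (intro DERIV_sum DERIV_cmult_right R2) auto
  have val: "(\<Sum>k<Suc m. Rd t m i k * B k j) =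
     (Vmat (E1 t) (E2 t) (n + 1) * (E1 t n + E2 t n) - (E1 t n + E2 t n) * Vmat (E1 t) (E2 t) n) $$ (i, j)"
  proof -
    let ?T = "Vmat (E1 t) (E2 t) (Suc (Suc m)) * (E1 t (Suc m) + E2 t (Suc m))
      - (E1 t (Suc m) + E2 t (Suc m)) * Vmat (E1 t) (E2 t) (Suc m)"
    have "(\<Sum>k<Suc m. Rd t m i k * B k j) = (\<Sum>k<Suc m. (\<Sum>l<Suc m. ?T $$ (i, l) * H l k) * B k j)"
    proof (intro sum.cong refl)
      fix k assume "k \<in> {..<Suc m}"
      hence k: "k \<le> m" by auto
      show "Rd t m i k * B k j = (\<Sum>l<Suc m. ?T $$ (i, l) * H l k) * B k j"
        using R3[OF i k] R4[OF i k] unfolding H_def by simp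
    qed
    also have "\<dots> = ?T $$ (i, j)" by (rule contract)
    finally show ?thesis using n by simp
  qed
  show ?thesis using deriv unfolding Eeq[symmetric] val .
qed

end
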